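(* Let $\lambda>0$, $\theta\in\mathbb R$, $f\in PC(\Gamma)$ bounded, and let $u\in C_b^2(\Gamma)$ satisfy $$Lu(\mathsf x)-\lambda u(\mathsf x)=f(\mathsf x)\ \ (\mathsf x\ne\mathsf v),\qquad u_i(0)=u_j(0)\ \ (1\le i,j\le N),\qquad \sum_{i=1}^N\rho_iu_i'(0)-\eta\lambda u(\mathsf v)=\eta\theta.$$ Let $X$ be the sticky diffusion generated by $(L,D(L))$ with stickiness $\eta$ (see context). Then for every $\mathsf x\in\Gamma$, $$u(\mathsf x)=-\mathbf E_{\mathsf x}\Big[\int_0^{+\infty}\big(f(X(s))\mathbf 1_{\{X(s)\ne\mathsf v\}}+\theta\mathbf 1_{\{X(s)=\mathsf v\}}\big)e^{-\lambda s}ds\Big].$$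
   Context: Star graph: fix $N\ge1$. $\Gamma$ is the quotient of the disjoint union of $N$ copies of $[0,\infty)$ obtained by identifying all the origins; points are written $(i,x)$, and $\mathsf v=(\cdot,0)$ is the unique vertex; metric $d((j,x),(i,y))=|x-y|$ if $i=j$, $x+y$ otherwise. A function $f:\Gamma\to\mathbb R$ is identified with $(f_1,\dots,f_N)$, $f_i(x)=f(i,x)$, $f_i(0)=f_j(0)$; derivatives are edgewise (one-sided at $0$). $C_0(\Gamma)$: continuous functions vanishing at infinity on each edge. $C^2(\Gamma)$: continuous $f$ with each $f_i\in C^2([0,\infty))$; $C_b^2(\Gamma)$: those with $f_i,f_i',f_i''$ bounded for all $i$. $PC(\Gamma)$: functions with each $f_i$ bounded continuous on $(0,\infty)$ and continuously extendable to $[0,\infty)$. Coefficients $\sigma,b\in PC(\Gamma)$ with $\sigma>\sigma_0>0$. $Lf(i,x)=\frac12\sigma_i^2(x)f_i''(x)+b_i(x)f_i'(x)$ for $x>0$, and $Lf(\mathsf v)$ is the common value of $\lim_{x\to0}L_if(x)$ when these coincide. For a stickiness $\eta\ge0$ (sticky when $\eta>0$) and $\rho_i>0$, $\sum_i\rho_i=1$: $D(L)=\{f\in C^2(\Gamma)\cap C_0(\Gamma): Lf\in C_0(\Gamma),\ \eta Lf(\mathsf v)=\sum_i\rho_if_i'(0)\}$; it generates a strongly continuous semigroup on $C_0(\Gamma)$ associated with a conservative continuous-path Markov process $X$; $\mathbf E_{\mathsf x}$ denotes expectation for $X(0)=\mathsf x$. *)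

theory Defs
  imports "HOL-Probability.Probability"
begin

text \<open>Points of the star graph with N edges are encoded as pairs (i,x) :: nat * real with
  i < N and x > 0 (the point x on edge i), and the unique vertex is encoded as (0,0).
  Edges are indexed 0..N-1.\<close>

definition vtx :: "nat \<times> real" where
  "vtx = (0, 0)"

definition Gamma :: "nat \<Rightarrow> (nat \<times> real) set" where
  "Gamma N = {(i, x). i < N \<and> 0 < x} \<union> {vtx}"

definition gdist :: "nat \<times> real \<Rightarrow> nat \<times> real \<Rightarrow> real" where
  "gdist p q = (if fst p = fst q then \<bar>snd p - snd q\<bar> else snd p + snd q)"

definition edge :: "(nat \<times> real \<Rightarrow> real) \<Rightarrow> nat \<Rightarrow> real \<Rightarrow> real" where
  "edge f i = (\<lambda>x. if x = 0 then f vtx else f (i, x))"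

definition d1 :: "(real \<Rightarrow> real) \<Rightarrow> real \<Rightarrow> real" where
  "d1 g x = vector_derivative g (at x within {0..})"

definition d2 :: "(real \<Rightarrow> real) \<Rightarrow> real \<Rightarrow> real" where
  "d2 g x = d1 (d1 g) x"

definition C2_half :: "(real \<Rightarrow> real) \<Rightarrow> bool" where
  "C2_half g \<longleftrightarrow> (\<exists>g1 g2. continuous_on {0..} g \<and> continuous_on {0..} g1 \<and> continuous_on {0..} g2 \<and>
      (\<forall>x\<ge>0. (g has_real_derivative g1 x) (at x within {0..}) \<and>
               (g1 has_real_derivative g2 x) (at x within {0..})))"

text \<open>Continuity on Gamma (w.r.t. the graph metric).\<close>
definition contG :: "nat \<Rightarrow> (nat \<times> real \<Rightarrow> real) \<Rightarrow> bool" where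
  "contG N f \<longleftrightarrow> (\<forall>i<N. continuous_on {0..} (edge f i))"

definition C0 :: "nat \<Rightarrow> (nat \<times> real \<Rightarrow> real) \<Rightarrow> bool" where
  "C0 N f \<longleftrightarrow> contG N f \<and> (\<forall>i<N. (edge f i \<longlongrightarrow> 0) at_top)"

definition C2G :: "nat \<Rightarrow> (nat \<times> real \<Rightarrow> real) \<Rightarrow> bool" where
  "C2G N f \<longleftrightarrow> contG N f \<and> (\<forall>i<N. C2_half (edge f i))"

definition C2bG :: "nat \<Rightarrow> (nat \<times> real \<Rightarrow> real) \<Rightarrow> bool" where
  "C2bG N f \<longleftrightarrow> C2G N f \<and> (\<forall>i<N. bounded (edge f i ` {0..}) \<and>
      bounded (d1 (edge f i) ` {0..}) \<and> bounded (d2 (edge f i) ` {0..}))"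

definition PC :: "nat \<Rightarrow> (nat \<times> real \<Rightarrow> real) \<Rightarrow> bool" where
  "PC N f \<longleftrightarrow> (\<forall>i<N. bounded ((\<lambda>x. f (i, x)) ` {0<..}) \<and> continuous_on {0<..} (\<lambda>x. f (i, x)) \<and>
      (\<exists>l. ((\<lambda>x. f (i, x)) \<longlongrightarrow> l) (at_right 0)))"

definition Ledge :: "(nat \<times> real \<Rightarrow> real) \<Rightarrow> (nat \<times> real \<Rightarrow> real) \<Rightarrow> (nat \<times> real \<Rightarrow> real)
    \<Rightarrow> nat \<Rightarrow> real \<Rightarrow> real" where
  "Ledge \<sigma> b f i x = (1/2) * (\<sigma> (i, x))\<^sup>2 * d2 (edge f i) x + b (i, x) * d1 (edge f i) x"

definition Lop :: "nat \<Rightarrow> (nat \<times> real \<Rightarrow> real) \<Rightarrow> (nat \<times> real \<Rightarrow> real) \<Rightarrow> (nat \<times> real \<Rightarrow> real)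
    \<Rightarrow> (nat \<times> real \<Rightarrow> real)" where
  "Lop N \<sigma> b f p = (if p = vtx then (THE l. \<forall>i<N. (Ledge \<sigma> b f i \<longlongrightarrow> l) (at_right 0))
                    else Ledge \<sigma> b f (fst p) (snd p))"

definition DL :: "nat \<Rightarrow> (nat \<times> real \<Rightarrow> real) \<Rightarrow> (nat \<times> real \<Rightarrow> real) \<Rightarrow> real \<Rightarrow> (nat \<Rightarrow> real)
    \<Rightarrow> (nat \<times> real \<Rightarrow> real) \<Rightarrow> bool" where
  "DL N \<sigma> b \<eta> \<rho> f \<longleftrightarrow> C2G N f \<and> C0 N f \<and> C0 N (Lop N \<sigma> b f) \<and>
      \<eta> * Lop N \<sigma> b f vtx = (\<Sum>i<N. \<rho> i * d1 (edge f i) 0)"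

definition gnorm :: "nat \<Rightarrow> (nat \<times> real \<Rightarrow> real) \<Rightarrow> real" where
  "gnorm N g = (SUP p\<in>Gamma N. \<bar>g p\<bar>)"

definition strongly_continuous_semigroup ::
  "nat \<Rightarrow> (real \<Rightarrow> (nat \<times> real \<Rightarrow> real) \<Rightarrow> (nat \<times> real \<Rightarrow> real)) \<Rightarrow> bool" where
  "strongly_continuous_semigroup N T \<longleftrightarrow>
     (\<forall>t\<ge>0. \<forall>g. C0 N g \<longrightarrow> C0 N (T t g)) \<and>
     (\<forall>t\<ge>0. \<forall>g h. C0 N g \<longrightarrow> (\<forall>p\<in>Gamma N. g p = h p) \<longrightarrow> (\<forall>p\<in>Gamma N. T t g p = T t h p)) \<and>
     (\<forall>t\<ge>0. \<forall>a c g h. C0 N g \<longrightarrow> C0 N h \<longrightarrow>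
        (\<forall>p\<in>Gamma N. T t (\<lambda>q. a * g q + c * h q) p = a * T t g p + c * T t h p)) \<and>
     (\<forall>t\<ge>0. \<exists>C. \<forall>g. C0 N g \<longrightarrow> gnorm N (T t g) \<le> C * gnorm N g) \<and>
     (\<forall>g. C0 N g \<longrightarrow> (\<forall>p\<in>Gamma N. T 0 g p = g p)) \<and>
     (\<forall>s\<ge>0. \<forall>t\<ge>0. \<forall>g. C0 N g \<longrightarrow> (\<forall>p\<in>Gamma N. T (s + t) g p = T s (T t g) p)) \<and>
     (\<forall>g. C0 N g \<longrightarrow> ((\<lambda>t. gnorm N (\<lambda>p. T t g p - g p)) \<longlongrightarrow> 0) (at_right 0))"

definition has_generator ::
  "nat \<Rightarrow> (real \<Rightarrow> (nat \<times> real \<Rightarrow> real) \<Rightarrow> (nat \<times> real \<Rightarrow> real))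
    \<Rightarrow> ((nat \<times> real \<Rightarrow> real) \<Rightarrow> (nat \<times> real \<Rightarrow> real)) \<Rightarrow> ((nat \<times> real \<Rightarrow> real) \<Rightarrow> bool) \<Rightarrow> bool" where
  "has_generator N T A D \<longleftrightarrow>
     (\<forall>g. C0 N g \<longrightarrow>
        ((\<exists>h. C0 N h \<and> ((\<lambda>t. gnorm N (\<lambda>p. (T t g p - g p) / t - h p)) \<longlongrightarrow> 0) (at_right 0))
           \<longleftrightarrow> D g)) \<and>
     (\<forall>g. C0 N g \<longrightarrow> D g \<longrightarrow>
        ((\<lambda>t. gnorm N (\<lambda>p. (T t g p - g p) / t - A g p)) \<longlongrightarrow> 0) (at_right 0))"

definition continuous_pathG :: "(real \<Rightarrow> nat \<times> real) \<Rightarrow> bool" where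
  "continuous_pathG w \<longleftrightarrow> (\<forall>t\<ge>0. \<forall>e>0. \<exists>d>0. \<forall>s\<ge>0. \<bar>s - t\<bar> < d \<longrightarrow> gdist (w s) (w t) < e)"

definition process_assoc ::
  "nat \<Rightarrow> (real \<Rightarrow> (nat \<times> real \<Rightarrow> real) \<Rightarrow> (nat \<times> real \<Rightarrow> real))
     \<Rightarrow> (nat \<times> real \<Rightarrow> 'a measure) \<Rightarrow> (real \<Rightarrow> 'a \<Rightarrow> nat \<times> real) \<Rightarrow> bool" where
  "process_assoc N T P X \<longleftrightarrow>
     (\<forall>x\<in>Gamma N.
        prob_space (P x) \<and>
        (\<lambda>(s, \<omega>). X s \<omega>) \<in> measurable (restrict_space lborel {0..} \<Otimes>\<^sub>M P x) borel \<and>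
        (\<forall>t\<ge>0. X t \<in> measurable (P x) borel) \<and>
        (\<forall>\<omega>\<in>space (P x). (\<forall>t\<ge>0. X t \<omega> \<in> Gamma N) \<and> continuous_pathG (\<lambda>t. X t \<omega>)) \<and>
        (AE \<omega> in P x. X 0 \<omega> = x) \<and>
        (\<forall>t\<ge>0. \<forall>g. C0 N g \<longrightarrow> (\<integral>\<omega>. g (X t \<omega>) \<partial>P x) = T t g x))"

end

theory Submission
  imports Defs "HOL-Real_Asymp.Real_Asymp"
begin


lemma vtx_Gamma: "vtx \<in> Gamma N"
  by (simp add: Gamma_def)

lemma Gamma_cases: "p \<in> Gamma N \<Longrightarrow> p = vtx \<or> (fst p < N \<and> 0 < snd p)"
  by (auto simp: Gamma_def)

lemma edge_pos: "x \<noteq> 0 \<Longrightarrow> edge f i x = f (i, x)"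
  by (simp add: edge_def)

lemma edge_lin: "edge (\<lambda>q. a * g q + c * h q) i = (\<lambda>x. a * edge g i x + c * edge h i x)"
  by (auto simp: edge_def)

lemma C0_lin: assumes "C0 N g" "C0 N h" shows "C0 N (\<lambda>q. a * g q + c * h q)"
  using assms unfolding C0_def contG_def edge_lin
  by (auto intro!: continuous_intros tendsto_eq_intros)

lemma bounded_edge:
  fixes K :: "real \<Rightarrow> real"
  assumes "continuous_on {0..} K" "(K \<longlongrightarrow> 0) at_top"
  shows "\<exists>B. \<forall>x\<ge>0. \<bar>K x\<bar> \<le> B"
proof -
  from assms(2) have "eventually (\<lambda>x. dist (K x) 0 < 1) at_top"
    by (simp add: tendsto_iff)
  then obtain R where R: "\<And>x. x \<ge> R \<Longrightarrow> \<bar>K x\<bar> < 1"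
    by (auto simp: eventually_at_top_linorder)
  have cpt: "compact (K ` {0..max R 0})"
    by (rule compact_continuous_image) (auto intro: continuous_on_subset[OF assms(1)])
  obtain B where B: "\<And>y. y \<in> K ` {0..max R 0} \<Longrightarrow> \<bar>y\<bar> \<le> B"
    using compact_imp_bounded[OF cpt] unfolding bounded_real by blast
  show ?thesis
  proof (intro exI allI impI)
    fix x :: real assume "x \<ge> 0"
    show "\<bar>K x\<bar> \<le> max B 1"
    proof (cases "x \<le> max R 0")
      case True then show ?thesis using B[of "K x"] \<open>x \<ge> 0\<close> by force
    next
      case False then have "R \<le> x" by linarith
      then show ?thesis using R[of x] by linarith
    qed
  qed
qed

lemma C0_bounded: assumes "C0 N g" shows "\<exists>B. \<forall>p\<in>Gamma N. \<bar>g p\<bar> \<le> B"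
proof -
  have "\<forall>i<N. \<exists>B. \<forall>x\<ge>0. \<bar>edge g i x\<bar> \<le> B"
    using assms bounded_edge unfolding C0_def contG_def by blast
  then obtain B where B: "\<And>i. i < N \<Longrightarrow> \<forall>x\<ge>0. \<bar>edge g i x\<bar> \<le> B i" by metis
  show ?thesis
  proof (intro exI ballI)
    fix p assume p: "p \<in> Gamma N"
    have nn: "\<And>i. i < N \<Longrightarrow> 0 \<le> B i" using B by (meson abs_ge_zero order_trans order_refl)
    show "\<bar>g p\<bar> \<le> \<bar>g vtx\<bar> + (\<Sum>i<N. B i)"
    proof (cases "p = vtx")
      case True then show ?thesis using nn by (auto intro!: sum_nonneg)
    next
      case False
      then obtain i x where px: "p = (i, x)" "i < N" "0 < x" using Gamma_cases[OF p] by (cases p) auto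
      have "\<bar>g p\<bar> \<le> B i" using B[OF px(2)] px edge_pos[of x g i] by (metis less_eq_real_def less_irrefl)
      also have "\<dots> \<le> (\<Sum>i<N. B i)" using px(2) nn by (intro member_le_sum) auto
      finally show ?thesis by simp
    qed
  qed
qed

lemma gnorm_upper: assumes "C0 N g" "p \<in> Gamma N" shows "\<bar>g p\<bar> \<le> gnorm N g"
proof -
  obtain B where "\<forall>p\<in>Gamma N. \<bar>g p\<bar> \<le> B" using C0_bounded[OF assms(1)] by blast
  then have "bdd_above ((\<lambda>p. \<bar>g p\<bar>) ` Gamma N)" by (auto intro: bdd_aboveI2)
  then show ?thesis unfolding gnorm_def using assms(2) by (rule cSUP_upper2) auto
qed

lemma gnorm_nonneg: assumes "C0 N g" shows "0 \<le> gnorm N g"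
  using gnorm_upper[OF assms vtx_Gamma] by linarith

lemma gnorm_zero: assumes "\<forall>p\<in>Gamma N. g p = 0" shows "gnorm N g = 0"
proof -
  have "(\<lambda>p. \<bar>g p\<bar>) ` Gamma N = {0}" using assms vtx_Gamma by auto
  then show ?thesis by (simp add: gnorm_def)
qed

lemma Gamma_measurable:
  fixes h :: "nat \<times> real \<Rightarrow> real"
  assumes "\<forall>i<N. continuous_on {0<..} (\<lambda>x. h (i, x))"
  shows "(\<lambda>p. if p \<in> Gamma N then h p else 0) \<in> borel_measurable borel"
proof -
  have eq: "(\<lambda>p. if p \<in> Gamma N then h p else 0) = (\<lambda>p. indicator {vtx} p * h vtx +
     (\<Sum>i<N. indicator {i} (fst p) * (indicator {0<..} (snd p) * h (i, snd p))))"
  proof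
    fix p :: "nat \<times> real"
    obtain i x where p: "p = (i, x)" by (cases p)
    show "(if p \<in> Gamma N then h p else 0) = indicator {vtx} p * h vtx +
     (\<Sum>i<N. indicator {i} (fst p) * (indicator {0<..} (snd p) * h (i, snd p)))"
    proof (cases "p = vtx")
      case True then show ?thesis using vtx_Gamma[of N] by (simp add: indicator_def vtx_def)
    next
      case False
      have s: "(\<Sum>j<N. indicator {j} i * (indicator {0<..} x * h (j, x))) =
            (if i < N then indicator {0<..} x * h (i, x) else 0)"
        by (simp add: indicator_def sum.delta' if_distrib cong: if_cong) 
      show ?thesis using False p s by (auto simp: Gamma_def indicator_def)
    qed
  qed
  have fst_m: "fst \<in> borel_measurable (borel :: (nat \<times> real) measure)"
    by (intro borel_measurable_continuous_onI continuous_intros)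
  have snd_m: "snd \<in> borel_measurable (borel :: (nat \<times> real) measure)"
    by (intro borel_measurable_continuous_onI continuous_intros)
  have pc: "\<And>i. i < N \<Longrightarrow> (\<lambda>x. indicator {0<..} x * h (i, x)) \<in> borel_measurable borel"
    using assms borel_measurable_continuous_on_indicator[of "{0<..}::real set"]
    using borel_measurable_continuous_on_indicator[of "{0<..}::real set" "\<lambda>x. h (i, x)" for i] assms
    by simp
  have vm: "(\<lambda>p::nat \<times> real. indicator {vtx} p * h vtx) \<in> borel_measurable borel"
    by (intro borel_measurable_times borel_measurable_indicator) auto
  have im: "\<And>i. (\<lambda>p::nat \<times> real. indicator {i} (fst p) :: real) \<in> borel_measurable borel"
    by (rule measurable_compose[OF fst_m]) (intro borel_measurable_indicator, auto)
  have sm: "\<And>i. i < N \<Longrightarrow> (\<lambda>p::nat \<times> real. indicator {0<..} (snd p) * h (i, snd p)) \<in> borel_measurable borel"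
    by (rule measurable_compose[OF snd_m pc])
  show ?thesis unfolding eq
  proof (rule borel_measurable_add[OF vm])
    show "(\<lambda>p. \<Sum>i<N. indicator {i} (fst p) * (indicator {0<..} (snd p) * h (i, snd p))) \<in> borel_measurable borel"
    proof (rule borel_measurable_sum)
      fix i assume "i \<in> {..<N}"
      then show "(\<lambda>p. indicator {i} (fst p) * (indicator {0<..} (snd p) * h (i, snd p))) \<in> borel_measurable borel"
        using borel_measurable_times[OF im sm] by auto
    qed
  qed
qed



lemma contG_open: assumes "contG N g" shows "\<forall>i<N. continuous_on {0<..} (\<lambda>x. g (i, x))"
proof (intro allI impI)
  fix i assume "i < N"
  then have "continuous_on {0<..} (edge g i)"
    using assms unfolding contG_def by (auto intro: continuous_on_subset)
  then show "continuous_on {0<..} (\<lambda>x. g (i, x))"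
    by (rule continuous_on_cong[THEN iffD1, rotated 2]) (auto simp: edge_pos)
qed

context
  fixes N :: nat and T :: "real \<Rightarrow> (nat \<times> real \<Rightarrow> real) \<Rightarrow> (nat \<times> real \<Rightarrow> real)"
    and P :: "nat \<times> real \<Rightarrow> 'a measure" and X :: "real \<Rightarrow> 'a \<Rightarrow> nat \<times> real"
  assumes sg: "strongly_continuous_semigroup N T"
    and proc: "process_assoc N T P X"
begin

lemma sg_C0: "t \<ge> 0 \<Longrightarrow> C0 N g \<Longrightarrow> C0 N (T t g)"
  using conjunct1[OF sg[unfolded strongly_continuous_semigroup_def]] by blast
lemma sg_lin: "t \<ge> 0 \<Longrightarrow> C0 N g \<Longrightarrow> C0 N h \<Longrightarrow> p \<in> Gamma N \<Longrightarrow>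
   T t (\<lambda>q. a * g q + c * h q) p = a * T t g p + c * T t h p"
  using conjunct1[OF conjunct2[OF conjunct2[OF sg[unfolded strongly_continuous_semigroup_def]]]] by blast
lemma sg_0: "C0 N g \<Longrightarrow> p \<in> Gamma N \<Longrightarrow> T 0 g p = g p"
  using conjunct1[OF conjunct2[OF conjunct2[OF conjunct2[OF conjunct2[OF sg[unfolded strongly_continuous_semigroup_def]]]]]] by blast
lemma sg_semi: "s \<ge> 0 \<Longrightarrow> t \<ge> 0 \<Longrightarrow> C0 N g \<Longrightarrow> p \<in> Gamma N \<Longrightarrow> T (s + t) g p = T s (T t g) p"
  using conjunct1[OF conjunct2[OF conjunct2[OF conjunct2[OF conjunct2[OF conjunct2[OF sg[unfolded strongly_continuous_semigroup_def]]]]]]] by blast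
lemma sg_cont: "C0 N g \<Longrightarrow> ((\<lambda>t. gnorm N (\<lambda>p. T t g p - g p)) \<longlongrightarrow> 0) (at_right 0)"
  using conjunct2[OF conjunct2[OF conjunct2[OF conjunct2[OF conjunct2[OF conjunct2[OF sg[unfolded strongly_continuous_semigroup_def]]]]]]] by blast

lemma proc_prob: "x \<in> Gamma N \<Longrightarrow> prob_space (P x)"
  using proc unfolding process_assoc_def by simp
lemma proc_meas: "x \<in> Gamma N \<Longrightarrow> t \<ge> 0 \<Longrightarrow> X t \<in> measurable (P x) borel"
  using proc unfolding process_assoc_def by simp
lemma proc_jmeas: "x \<in> Gamma N \<Longrightarrow> (\<lambda>(s, \<omega>). X s \<omega>) \<in> measurable (restrict_space lborel {0..} \<Otimes>\<^sub>M P x) borel"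
  using proc unfolding process_assoc_def by simp
lemma proc_Gamma: "x \<in> Gamma N \<Longrightarrow> \<omega> \<in> space (P x) \<Longrightarrow> t \<ge> 0 \<Longrightarrow> X t \<omega> \<in> Gamma N"
  using proc unfolding process_assoc_def by simp
lemma proc_T: "x \<in> Gamma N \<Longrightarrow> t \<ge> 0 \<Longrightarrow> C0 N g \<Longrightarrow> (\<integral>\<omega>. g (X t \<omega>) \<partial>P x) = T t g x"
  using proc unfolding process_assoc_def by simp

lemma comp_meas:
  fixes h :: "nat \<times> real \<Rightarrow> real"
  assumes x: "x \<in> Gamma N" and t: "t \<ge> 0" and h: "\<forall>i<N. continuous_on {0<..} (\<lambda>y. h (i, y))"
  shows "(\<lambda>\<omega>. h (X t \<omega>)) \<in> borel_measurable (P x)"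
proof -
  have "(\<lambda>\<omega>. (\<lambda>p. if p \<in> Gamma N then h p else 0) (X t \<omega>)) \<in> borel_measurable (P x)"
    by (rule measurable_compose[OF proc_meas[OF x t] Gamma_measurable[OF h]])
  then show ?thesis
    by (rule measurable_cong[THEN iffD1, rotated]) (simp add: proc_Gamma[OF x _ t])
qed

lemma T_bound:
  assumes x: "x \<in> Gamma N" and t: "t \<ge> 0" and g: "C0 N g"
  shows "\<bar>T t g x\<bar> \<le> gnorm N g"
proof -
  interpret prob_space "P x" by (rule proc_prob[OF x])
  have m: "(\<lambda>\<omega>. g (X t \<omega>)) \<in> borel_measurable (P x)"
    using g unfolding C0_def by (intro comp_meas[OF x t contG_open]) simp
  have b: "\<And>\<omega>. \<omega> \<in> space (P x) \<Longrightarrow> \<bar>g (X t \<omega>)\<bar> \<le> gnorm N g"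
    using gnorm_upper[OF g] proc_Gamma[OF x _ t] by blast
  have int: "integrable (P x) (\<lambda>\<omega>. g (X t \<omega>))"
    using b m by (intro integrable_const_bound[where B="gnorm N g"]) (auto intro!: AE_I2)
  have "(\<integral>\<omega>. g (X t \<omega>) \<partial>P x) \<le> gnorm N g"
    using b by (intro integral_le_const[OF int] AE_I2) (auto simp: abs_le_iff)
  moreover have "- gnorm N g \<le> (\<integral>\<omega>. g (X t \<omega>) \<partial>P x)"
    using b by (intro integral_ge_const[OF int] AE_I2) (force simp: abs_le_iff)
  ultimately show ?thesis using proc_T[OF x t g] by auto
qed

lemma T_diff_bound:
  assumes x: "x \<in> Gamma N" and st: "0 \<le> s" "s \<le> t" and g: "C0 N g"
  shows "\<bar>T t g x - T s g x\<bar> \<le> gnorm N (\<lambda>q. T (t - s) g q - g q)"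
proof -
  have g1: "C0 N (T (t - s) g)" using sg_C0 st g by simp
  have "T t g x = T s (T (t - s) g) x" using sg_semi[of s "t - s" g x] st g x by simp
  moreover have "T s (\<lambda>q. 1 * T (t - s) g q + (-1) * g q) x = 1 * T s (T (t - s) g) x + (-1) * T s g x"
    by (rule sg_lin[OF st(1) g1 g x])
  moreover have "\<bar>T s (\<lambda>q. 1 * T (t - s) g q + (-1) * g q) x\<bar> \<le> gnorm N (\<lambda>q. 1 * T (t - s) g q + (-1) * g q)"
    by (rule T_bound[OF x st(1) C0_lin[OF g1 g]])
  ultimately show ?thesis by simp
qed

lemma rho_small:
  assumes g: "C0 N g" and e: "e > 0"
  shows "\<exists>d>0. \<forall>r. 0 \<le> r \<and> r < d \<longrightarrow> gnorm N (\<lambda>q. T r g q - g q) < e"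
proof -
  from sg_cont[OF g] e have "eventually (\<lambda>r. dist (gnorm N (\<lambda>q. T r g q - g q)) 0 < e) (at_right 0)"
    by (simp add: tendsto_iff)
  then obtain d where d: "d > 0" "\<And>r. 0 < r \<Longrightarrow> r < d \<Longrightarrow> \<bar>gnorm N (\<lambda>q. T r g q - g q)\<bar> < e"
    by (auto simp: eventually_at_right_field)
  have z: "gnorm N (\<lambda>q. T 0 g q - g q) = 0" by (rule gnorm_zero) (simp add: sg_0[OF g])
  show ?thesis
  proof (intro exI[of _ d] conjI allI impI d(1))
    fix r :: real assume "0 \<le> r \<and> r < d"
    then show "gnorm N (\<lambda>q. T r g q - g q) < e"
      using d(2)[of r] z e by (cases "r = 0") auto
  qed
qed

lemma T_cont:
  assumes x: "x \<in> Gamma N" and g: "C0 N g"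
  shows "continuous_on {0..} (\<lambda>t. T t g x)"
  unfolding continuous_on_iff
proof (intro ballI allI impI)
  fix t e :: real assume t: "t \<in> {0..}" and e: "e > 0"
  obtain d where d: "d > 0" "\<And>r. 0 \<le> r \<Longrightarrow> r < d \<Longrightarrow> gnorm N (\<lambda>q. T r g q - g q) < e"
    using rho_small[OF g e] by blast
  show "\<exists>d>0. \<forall>x'\<in>{0..}. dist x' t < d \<longrightarrow> dist (T x' g x) (T t g x) < e"
  proof (intro exI[of _ d] conjI ballI impI d(1))
    fix s :: real assume s: "s \<in> {0..}" "dist s t < d"
    show "dist (T s g x) (T t g x) < e"
    proof (cases "s \<le> t")
      case True
      have "\<bar>T t g x - T s g x\<bar> \<le> gnorm N (\<lambda>q. T (t - s) g q - g q)"
        using T_diff_bound[OF x _ True g] s by simp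
      also have "\<dots> < e" using d(2)[of "t - s"] True s by (auto simp: dist_real_def)
      finally show ?thesis by (simp add: dist_real_def abs_minus_commute)
    next
      case False
      have "\<bar>T s g x - T t g x\<bar> \<le> gnorm N (\<lambda>q. T (s - t) g q - g q)"
        using T_diff_bound[OF x _ _ g, of t s] t False by simp
      also have "\<dots> < e" using d(2)[of "s - t"] False s by (auto simp: dist_real_def)
      finally show ?thesis by (simp add: dist_real_def)
    qed
  qed
qed

end


context
  fixes N :: nat and T :: "real \<Rightarrow> (nat \<times> real \<Rightarrow> real) \<Rightarrow> (nat \<times> real \<Rightarrow> real)"
    and P :: "nat \<times> real \<Rightarrow> 'a measure" and X :: "real \<Rightarrow> 'a \<Rightarrow> nat \<times> real"
  assumes sg: "strongly_continuous_semigroup N T"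
    and proc: "process_assoc N T P X"
begin

lemma Q_ident:
  assumes x: "x \<in> Gamma N" and s: "s \<ge> 0" and r: "r \<ge> 0" and w: "C0 N w" and Aw: "C0 N Aw"
  shows "T s (\<lambda>p. (T r w p - w p) / r - Aw p) x = (T s (T r w) x - T s w x) / r - T s Aw x"
proof -
  have w1: "C0 N (T r w)" using sg_C0[OF sg proc r w] .
  let ?A = "\<lambda>q. (1/r) * T r w q + (-1/r) * w q"
  have A: "C0 N ?A" by (rule C0_lin[OF w1 w])
  have e: "(\<lambda>p. (T r w p - w p) / r - Aw p) = (\<lambda>q. 1 * ?A q + (-1) * Aw q)"
    by (auto simp: diff_divide_distrib)
  have "T s (\<lambda>q. 1 * ?A q + (-1) * Aw q) x = 1 * T s ?A x + (-1) * T s Aw x"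
    by (rule sg_lin[OF sg proc s A Aw x])
  moreover have "T s ?A x = (1/r) * T s (T r w) x + (-1/r) * T s w x"
    by (rule sg_lin[OF sg proc s w1 w x])
  ultimately show ?thesis unfolding e by (simp add: diff_divide_distrib)
qed

lemma T_deriv:
  assumes x: "x \<in> Gamma N" and t: "t \<ge> 0" and w: "C0 N w" and Aw: "C0 N Aw"
    and conv: "((\<lambda>r. gnorm N (\<lambda>p. (T r w p - w p) / r - Aw p)) \<longlongrightarrow> 0) (at_right 0)"
  shows "((\<lambda>s. T s w x) has_real_derivative T t Aw x) (at t within {0..})"
  unfolding has_field_derivative_iff tendsto_iff eventually_at
proof (intro allI impI)
  fix e :: real assume e: "e > 0"
  from conv have "eventually (\<lambda>r. dist (gnorm N (\<lambda>p. (T r w p - w p) / r - Aw p)) 0 < e/2) (at_right 0)"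
    unfolding tendsto_iff using e half_gt_zero by blast
  then obtain d1 where d1: "d1 > 0" "\<And>r. 0 < r \<Longrightarrow> r < d1 \<Longrightarrow> \<bar>gnorm N (\<lambda>p. (T r w p - w p) / r - Aw p)\<bar> < e/2"
    by (auto simp: eventually_at_right_field)
  from T_cont[OF sg proc x Aw] t e obtain d2 where d2: "d2 > 0"
      "\<And>s. s \<in> {0..} \<Longrightarrow> dist s t < d2 \<Longrightarrow> dist (T s Aw x) (T t Aw x) < e/2"
    unfolding continuous_on_iff by (metis atLeast_iff half_gt_zero)
  have key: "\<And>s r. s \<ge> 0 \<Longrightarrow> 0 < r \<Longrightarrow> r < d1 \<Longrightarrow>
     \<bar>(T s (T r w) x - T s w x) / r - T s Aw x\<bar> < e/2"
  proof -
    fix s r :: real assume sr: "s \<ge> 0" "0 < r" "r < d1"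
    have "\<bar>(T s (T r w) x - T s w x) / r - T s Aw x\<bar> = \<bar>T s (\<lambda>p. (T r w p - w p) / r - Aw p) x\<bar>"
      using Q_ident[OF x sr(1) _ w Aw, of r] sr by simp
    also have "\<dots> \<le> gnorm N (\<lambda>p. (T r w p - w p) / r - Aw p)"
    proof (rule T_bound[OF sg proc x sr(1)])
      have "C0 N (\<lambda>q. 1 * ((1/r) * T r w q + (-1/r) * w q) + (-1) * Aw q)"
        using sr by (intro C0_lin[OF C0_lin[OF sg_C0[OF sg proc _ w] w] Aw]) auto
      moreover have "(\<lambda>q. 1 * ((1/r) * T r w q + (-1/r) * w q) + (-1) * Aw q) = (\<lambda>p. (T r w p - w p) / r - Aw p)"
        by (auto simp: diff_divide_distrib)
      ultimately show "C0 N (\<lambda>p. (T r w p - w p) / r - Aw p)" by simp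
    qed
    also have "\<dots> < e/2" using d1(2)[OF sr(2,3)] by linarith
    finally show "\<bar>(T s (T r w) x - T s w x) / r - T s Aw x\<bar> < e/2" .
  qed
  show "\<exists>d>0. \<forall>s\<in>{0..}. s \<noteq> t \<and> dist s t < d \<longrightarrow>
      dist ((T s w x - T t w x) / (s - t)) (T t Aw x) < e"
  proof (intro exI[of _ "min d1 d2"] conjI ballI impI)
    show "0 < min d1 d2" using d1 d2 by simp
    fix s :: real assume s: "s \<in> {0..}" "s \<noteq> t \<and> dist s t < min d1 d2"
    show "dist ((T s w x - T t w x) / (s - t)) (T t Aw x) < e"
    proof (cases "s > t")
      case True
      define r where "r = s - t"
      have r: "0 < r" "r < d1" using True s by (auto simp: r_def dist_real_def)
      have "T s w x = T t (T r w) x" using sg_semi[OF sg proc t _ w x, of r] r by (simp add: r_def)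
      then have "(T s w x - T t w x) / (s - t) - T t Aw x = (T t (T r w) x - T t w x) / r - T t Aw x"
        by (simp add: r_def)
      then show ?thesis using key[OF t r] e by (simp add: dist_real_def)
    next
      case False
      define r where "r = t - s"
      have r: "0 < r" "r < d1" using False s by (auto simp: r_def dist_real_def)
      have s0: "s \<ge> 0" using s by simp
      have "T t w x = T s (T r w) x" using sg_semi[OF sg proc s0 _ w x, of r] r by (simp add: r_def)
      then have "(T s w x - T t w x) / (s - t) - T t Aw x =
          ((T s (T r w) x - T s w x) / r - T s Aw x) + (T s Aw x - T t Aw x)"
        using r by (simp add: r_def field_simps)
      moreover have "\<bar>T s Aw x - T t Aw x\<bar> < e/2" using d2(2)[OF s(1)] s by (simp add: dist_real_def)
      ultimately show ?thesis using key[OF s0 r] unfolding dist_real_def by linarith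
    qed
  qed
qed

end


lemma exp_set_integrable:
  fixes lam C :: real assumes lam: "lam > 0"
  shows "set_integrable lborel {0..} (\<lambda>s. C * exp (- lam * s))"
proof -
  have "(\<lambda>s. exp (- lam * s)) absolutely_integrable_on {0..}"
    by (rule nonnegative_absolutely_integrable_1[OF integrable_on_exp_minus_to_infinity[OF lam]]) auto
  then have "integrable lebesgue (\<lambda>s. indicator {0..} s *\<^sub>R exp (- lam * s))"
    unfolding set_integrable_def by simp
  moreover have m: "(\<lambda>s::real. indicator {0..} s *\<^sub>R exp (- lam * s)) \<in> borel_measurable lborel"
  proof -
    have "continuous_on {0..} (\<lambda>s::real. exp (- lam * s))" by (intro continuous_intros)
    from borel_measurable_continuous_on_indicator[OF _ this] show ?thesis by simp
  qed
  ultimately have "integrable lborel (\<lambda>s::real. indicator {0..} s *\<^sub>R exp (- lam * s))"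
    using integrable_completion[of "\<lambda>s::real. indicator {0..} s *\<^sub>R exp (- lam * s)" lborel] m by simp
  then have "set_integrable lborel {0..} (\<lambda>s. exp (- lam * s))"
    unfolding set_integrable_def .
  then show ?thesis by (rule set_integrable_mult_right)
qed

context
  fixes N :: nat and T :: "real \<Rightarrow> (nat \<times> real \<Rightarrow> real) \<Rightarrow> (nat \<times> real \<Rightarrow> real)"
    and P :: "nat \<times> real \<Rightarrow> 'a measure" and X :: "real \<Rightarrow> 'a \<Rightarrow> nat \<times> real"
  assumes sg: "strongly_continuous_semigroup N T"
    and proc: "process_assoc N T P X"
begin

lemma resolvent_identity:
  assumes x: "x \<in> Gamma N" and lam: "lam > 0" and w: "C0 N w" and Aw: "C0 N Aw"
    and conv: "((\<lambda>r. gnorm N (\<lambda>p. (T r w p - w p) / r - Aw p)) \<longlongrightarrow> 0) (at_right 0)"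
  defines "h \<equiv> (\<lambda>q. lam * w q + (-1) * Aw q)"
  shows "set_integrable lborel {0..} (\<lambda>s. exp (- lam * s) * T s h x)"
    and "(LINT s:{0..}|lborel. exp (- lam * s) * T s h x) = w x"
proof -
  have h: "C0 N h" unfolding h_def by (rule C0_lin[OF w Aw])
  have Th: "\<And>t. t \<ge> 0 \<Longrightarrow> T t h x = lam * T t w x + (-1) * T t Aw x"
    unfolding h_def by (rule sg_lin[OF sg proc _ w Aw x])
  define H where "H = (\<lambda>s. exp (- lam * s) * T s h x)"
  define E where "E = (\<lambda>t. exp (- lam * t) * T t w x)"
  have dE: "\<And>t. t \<ge> 0 \<Longrightarrow> (E has_vector_derivative (- H t)) (at t within {0..})"
  proof -
    fix t :: real assume t: "t \<ge> 0"
    have d: "((\<lambda>s. T s w x) has_real_derivative T t Aw x) (at t within {0..})"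
      by (rule T_deriv[OF sg proc x t w Aw conv])
    have d2: "((\<lambda>s. exp (- lam * s)) has_real_derivative exp (- lam * t) * (- lam)) (at t within {0..})"
      by (auto intro!: derivative_eq_intros)
    have "(E has_real_derivative (exp (- lam * t) * (- lam) * T t w x + exp (- lam * t) * T t Aw x)) (at t within {0..})"
      unfolding E_def using DERIV_mult[OF d2 d] by (simp add: mult.commute)
    moreover have "exp (- lam * t) * (- lam) * T t w x + exp (- lam * t) * T t Aw x = - H t"
      unfolding H_def Th[OF t] by (simp add: algebra_simps)
    ultimately show "(E has_vector_derivative (- H t)) (at t within {0..})"
      by (simp add: has_real_derivative_iff_has_vector_derivative)
  qed
  have ftc: "\<And>b. b \<ge> 0 \<Longrightarrow> ((\<lambda>s. - H s) has_integral (E b - E 0)) {0..b}"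
    by (rule fundamental_theorem_of_calculus)
       (auto intro: has_vector_derivative_within_subset[OF dE])
  have E0: "E 0 = w x" unfolding E_def using sg_0[OF sg proc w x] by simp
  have Hc: "continuous_on {0..} H"
    unfolding H_def by (intro continuous_intros T_cont[OF sg proc x h])
  have Hb: "\<And>s. s \<ge> 0 \<Longrightarrow> norm (H s) \<le> gnorm N h * exp (- lam * s)"
    unfolding H_def using T_bound[OF sg proc x _ h] by (simp add: abs_mult mult.commute mult_left_mono)
  have int: "set_integrable lborel {0..} H"
    unfolding set_integrable_def
  proof (rule Bochner_Integration.integrable_bound[OF exp_set_integrable[OF lam, of "gnorm N h", unfolded set_integrable_def]])
    show "(\<lambda>s. indicator {0..} s *\<^sub>R H s) \<in> borel_measurable lborel"
      using borel_measurable_continuous_on_indicator[OF _ Hc] by simp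
    show "AE s in lborel. norm (indicator {0..} s *\<^sub>R H s) \<le> norm (indicator {0..} s *\<^sub>R (gnorm N h * exp (- lam * s)))"
      using Hb gnorm_nonneg[OF h] by (intro AE_I2) (auto simp: indicator_def)
  qed
  then show "set_integrable lborel {0..} (\<lambda>s. exp (- lam * s) * T s h x)" unfolding H_def .
  have lim1: "((\<lambda>b. LINT s:{0..b}|lborel. H s) \<longlongrightarrow> (LINT s:{0..}|lborel. H s)) at_top"
    by (rule tendsto_set_lebesgue_integral_at_top[OF _ int]) auto
  have eq: "\<And>b. b \<ge> 0 \<Longrightarrow> (LINT s:{0..b}|lborel. H s) = w x - E b"
  proof -
    fix b :: real assume b: "b \<ge> 0"
    have "set_integrable lborel {0..b} H" by (rule set_integrable_subset[OF int]) auto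
    then have "(LINT s:{0..b}|lborel. H s) = integral {0..b} H" by (rule set_borel_integral_eq_integral)
    also have "\<dots> = - integral {0..b} (\<lambda>s. - H s)" by (simp add: integral_neg)
    also have "\<dots> = w x - E b" using integral_unique[OF ftc[OF b]] E0 by simp
    finally show "(LINT s:{0..b}|lborel. H s) = w x - E b" .
  qed
  have Elim: "(E \<longlongrightarrow> 0) at_top"
  proof (rule tendsto_sandwich[of "\<lambda>t. - (gnorm N w * exp (- lam * t))" _ _ "\<lambda>t. gnorm N w * exp (- lam * t)"])
    have e0: "((\<lambda>t. exp (- lam * t)) \<longlongrightarrow> 0) at_top"
      using lam by real_asymp
    show "((\<lambda>t. gnorm N w * exp (- lam * t)) \<longlongrightarrow> 0) at_top"
      using tendsto_mult_right_zero[OF e0] by simp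
    then show "((\<lambda>t. - (gnorm N w * exp (- lam * t))) \<longlongrightarrow> 0) at_top"
      using tendsto_minus by fastforce
    have "\<And>t. t \<ge> 0 \<Longrightarrow> \<bar>E t\<bar> \<le> gnorm N w * exp (- lam * t)"
      unfolding E_def using T_bound[OF sg proc x _ w] by (simp add: abs_mult mult.commute mult_left_mono)
    then show "eventually (\<lambda>t. - (gnorm N w * exp (- lam * t)) \<le> E t) at_top"
      "eventually (\<lambda>t. E t \<le> gnorm N w * exp (- lam * t)) at_top"
      by (auto simp: eventually_at_top_linorder abs_le_iff intro!: exI[of _ 0]; force)+
  qed
  have lim2: "((\<lambda>b. LINT s:{0..b}|lborel. H s) \<longlongrightarrow> w x) at_top"
  proof -
    have l: "((\<lambda>b. w x - E b) \<longlongrightarrow> w x - 0) at_top" by (intro tendsto_intros Elim)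
    have "eventually (\<lambda>b. (LINT s:{0..b}|lborel. H s) = w x - E b) at_top"
      by (auto simp: eventually_at_top_linorder eq intro!: exI[of _ 0])
    with l show ?thesis using tendsto_cong by fastforce
  qed
  show "(LINT s:{0..}|lborel. exp (- lam * s) * T s h x) = w x"
    using tendsto_unique[OF _ lim1 lim2] unfolding H_def by simp
qed

end


context
  fixes N :: nat and T :: "real \<Rightarrow> (nat \<times> real \<Rightarrow> real) \<Rightarrow> (nat \<times> real \<Rightarrow> real)"
    and P :: "nat \<times> real \<Rightarrow> 'a measure" and X :: "real \<Rightarrow> 'a \<Rightarrow> nat \<times> real"
  assumes sg: "strongly_continuous_semigroup N T"
    and proc: "process_assoc N T P X"
begin

lemma joint_meas:
  fixes h :: "nat \<times> real \<Rightarrow> real"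
  assumes x: "x \<in> Gamma N" and h: "\<forall>i<N. continuous_on {0<..} (\<lambda>y. h (i, y))"
  shows "(\<lambda>z. h (X (fst z) (snd z))) \<in> borel_measurable (restrict_space lborel {0..} \<Otimes>\<^sub>M P x)"
proof -
  have "(\<lambda>z. (\<lambda>p. if p \<in> Gamma N then h p else 0) ((\<lambda>(s, \<omega>). X s \<omega>) z)) \<in> borel_measurable (restrict_space lborel {0..} \<Otimes>\<^sub>M P x)"
    by (rule measurable_compose[OF proc_jmeas[OF sg proc x] Gamma_measurable[OF h]])
  moreover have "\<And>z. z \<in> space (restrict_space lborel {0..} \<Otimes>\<^sub>M P x) \<Longrightarrow>
      (\<lambda>p. if p \<in> Gamma N then h p else 0) ((\<lambda>(s, \<omega>). X s \<omega>) z) = h (X (fst z) (snd z))"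
    using proc_Gamma[OF sg proc x] by (auto simp: space_pair_measure space_restrict_space)
  ultimately show ?thesis by (rule measurable_cong[THEN iffD1, rotated]) 
qed

lemma final_limit:
  fixes w Aw :: "nat \<Rightarrow> nat \<times> real \<Rightarrow> real" and F :: "nat \<times> real \<Rightarrow> real"
  assumes x: "x \<in> Gamma N" and lam: "lam > 0"
    and w: "\<And>n. C0 N (w n)" and Aw: "\<And>n. C0 N (Aw n)"
    and conv: "\<And>n. ((\<lambda>r. gnorm N (\<lambda>p. (T r (w n) p - w n p) / r - Aw n p)) \<longlongrightarrow> 0) (at_right 0)"
    and F: "\<forall>i<N. continuous_on {0<..} (\<lambda>y. F (i, y))"
    and lim: "\<And>p. p \<in> Gamma N \<Longrightarrow> (\<lambda>n. lam * w n p + (-1) * Aw n p) \<longlonglongrightarrow> - F p"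
    and bnd: "\<And>n p. p \<in> Gamma N \<Longrightarrow> \<bar>lam * w n p + (-1) * Aw n p\<bar> \<le> B"
    and wlim: "(\<lambda>n. w n x) \<longlonglongrightarrow> ux"
  shows "ux = - (\<integral>\<omega>. (LINT s:{0..}|lborel. F (X s \<omega>) * exp (- lam * s)) \<partial>P x)"
proof -
  define M1 where "M1 = restrict_space lborel ({0..} :: real set)"
  interpret Px: prob_space "P x" by (rule proc_prob[OF sg proc x])
  interpret pair_sigma_finite M1 "P x"
    unfolding M1_def
    by (intro pair_sigma_finite.intro sigma_finite_measure_restrict_space sigma_finite_lborel
          prob_space_imp_sigma_finite proc_prob[OF sg proc x]) auto
  define h where "h n = (\<lambda>q. lam * w n q + (-1) * Aw n q)" for n
  have hC0: "\<And>n. C0 N (h n)" unfolding h_def by (intro C0_lin w Aw)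
  define G where "G n = (\<lambda>z. exp (- lam * fst z) * h n (X (fst z) (snd z)))" for n
  define Gi where "Gi = (\<lambda>z. - (F (X (fst z) (snd z)) * exp (- lam * fst z)))"
  define W where "W = (\<lambda>z::real \<times> 'a. \<bar>B\<bar> * exp (- lam * fst z))"
  have spM1: "space M1 = {0..}" by (simp add: M1_def space_restrict_space)
  have sp: "\<And>z. z \<in> space (M1 \<Otimes>\<^sub>M P x) \<Longrightarrow> fst z \<ge> 0 \<and> X (fst z) (snd z) \<in> Gamma N"
    using proc_Gamma[OF sg proc x] by (auto simp: space_pair_measure spM1)
  have em: "(\<lambda>s::real. exp (- lam * s)) \<in> borel_measurable M1"
    unfolding M1_def by (intro measurable_restrict_space1) simp
  have fstm: "(\<lambda>z. exp (- lam * fst z)) \<in> borel_measurable (M1 \<Otimes>\<^sub>M P x)"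
    by (rule measurable_compose[OF measurable_fst em])
  have Gm: "\<And>n. G n \<in> borel_measurable (M1 \<Otimes>\<^sub>M P x)"
    unfolding G_def M1_def
    using hC0 unfolding C0_def
    by (intro borel_measurable_times fstm[unfolded M1_def] joint_meas[OF x] contG_open) auto
  have Gim: "Gi \<in> borel_measurable (M1 \<Otimes>\<^sub>M P x)"
    unfolding Gi_def M1_def
    by (intro borel_measurable_uminus borel_measurable_times fstm[unfolded M1_def] joint_meas[OF x F])
  have intM1: "integrable M1 (\<lambda>s. C * exp (- lam * s))" for C
    unfolding M1_def using exp_set_integrable[OF lam, of C]
    by (subst integrable_restrict_space) (auto simp: set_integrable_def)
  have Wi: "integrable (M1 \<Otimes>\<^sub>M P x) W"
  proof (rule Fubini_integrable)
    show "W \<in> borel_measurable (M1 \<Otimes>\<^sub>M P x)" unfolding W_def using fstm by simp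
    have "(\<lambda>s. \<integral>\<omega>. norm (W (s, \<omega>)) \<partial>P x) = (\<lambda>s. \<bar>B\<bar> * exp (- lam * s))"
      by (auto simp: W_def Px.prob_space)
    then show "integrable M1 (\<lambda>s. \<integral>\<omega>. norm (W (s, \<omega>)) \<partial>P x)" using intM1 by simp
    show "AE s in M1. integrable (P x) (\<lambda>\<omega>. W (s, \<omega>))"
      by (auto simp: W_def)
  qed
  have AElim: "AE z in M1 \<Otimes>\<^sub>M P x. (\<lambda>n. G n z) \<longlonglongrightarrow> Gi z"
  proof (rule AE_I2)
    fix z assume z: "z \<in> space (M1 \<Otimes>\<^sub>M P x)"
    have "(\<lambda>n. exp (- lam * fst z) * h n (X (fst z) (snd z))) \<longlonglongrightarrow> exp (- lam * fst z) * (- F (X (fst z) (snd z)))"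
      using lim[of "X (fst z) (snd z)"] sp[OF z] unfolding h_def by (intro tendsto_mult_left) auto
    then show "(\<lambda>n. G n z) \<longlonglongrightarrow> Gi z" by (simp add: G_def Gi_def mult.commute)
  qed
  have AEb: "\<And>n. AE z in M1 \<Otimes>\<^sub>M P x. norm (G n z) \<le> W z"
  proof (rule AE_I2)
    fix n z assume z: "z \<in> space (M1 \<Otimes>\<^sub>M P x)"
    have "\<bar>h n (X (fst z) (snd z))\<bar> \<le> \<bar>B\<bar>" using bnd[of "X (fst z) (snd z)" n] sp[OF z] unfolding h_def by auto
    then show "norm (G n z) \<le> W z" unfolding G_def W_def by (simp add: abs_mult mult_left_mono mult.commute)
  qed
  have Giint: "integrable (M1 \<Otimes>\<^sub>M P x) Gi"
    by (rule integrable_dominated_convergence[OF Gim Gm Wi AElim AEb])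
  have Gint: "\<And>n. integrable (M1 \<Otimes>\<^sub>M P x) (G n)"
    by (rule integrable_dominated_convergence2[OF Gim Gm Wi AElim AEb])
  have L1: "(\<lambda>n. integral\<^sup>L (M1 \<Otimes>\<^sub>M P x) (G n)) \<longlonglongrightarrow> integral\<^sup>L (M1 \<Otimes>\<^sub>M P x) Gi"
    by (rule integral_dominated_convergence[OF Gim Gm Wi AElim AEb])
  have eqn: "integral\<^sup>L (M1 \<Otimes>\<^sub>M P x) (G n) = w n x" for n
  proof -
    have "integral\<^sup>L (M1 \<Otimes>\<^sub>M P x) (G n) = (\<integral>s. (\<integral>\<omega>. G n (s, \<omega>) \<partial>P x) \<partial>M1)"
      by (rule integral_fst'[OF Gint, symmetric])
    also have "\<dots> = (\<integral>s. exp (- lam * s) * T s (h n) x \<partial>M1)"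
    proof (rule Bochner_Integration.integral_cong[OF refl])
      fix s assume "s \<in> space M1"
      then have s: "s \<ge> 0" by (simp add: spM1)
      show "(\<integral>\<omega>. G n (s, \<omega>) \<partial>P x) = exp (- lam * s) * T s (h n) x"
        unfolding G_def using proc_T[OF sg proc x s hC0] by simp
    qed
    also have "\<dots> = (LINT s:{0..}|lborel. exp (- lam * s) * T s (h n) x)"
      unfolding M1_def by (subst integral_restrict_space) (auto simp: set_lebesgue_integral_def)
    also have "\<dots> = w n x"
      unfolding h_def by (rule resolvent_identity(2)[OF sg proc x lam w Aw conv])
    finally show ?thesis .
  qed
  have "ux = integral\<^sup>L (M1 \<Otimes>\<^sub>M P x) Gi"
    using LIMSEQ_unique[OF wlim] L1 unfolding eqn by simp
  also have "\<dots> = - integral\<^sup>L (M1 \<Otimes>\<^sub>M P x) (\<lambda>(s, \<omega>). F (X s \<omega>) * exp (- lam * s))"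
    unfolding Gi_def by (simp add: case_prod_beta')
  also have "integral\<^sup>L (M1 \<Otimes>\<^sub>M P x) (\<lambda>(s, \<omega>). F (X s \<omega>) * exp (- lam * s)) =
     (\<integral>\<omega>. (\<integral>s. F (X s \<omega>) * exp (- lam * s) \<partial>M1) \<partial>P x)"
  proof (rule integral_snd[symmetric])
    have "integrable (M1 \<Otimes>\<^sub>M P x) (\<lambda>z. - Gi z)" using Giint by simp
    then show "integrable (M1 \<Otimes>\<^sub>M P x) (\<lambda>(s, \<omega>). F (X s \<omega>) * exp (- lam * s))"
      unfolding Gi_def by (simp add: case_prod_beta')
  qed
  also have "(\<lambda>\<omega>. (\<integral>s. F (X s \<omega>) * exp (- lam * s) \<partial>M1)) = (\<lambda>\<omega>. LINT s:{0..}|lborel. F (X s \<omega>) * exp (- lam * s))"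
    unfolding M1_def by (subst integral_restrict_space) (auto simp: set_lebesgue_integral_def)
  finally show ?thesis .
qed

end


definition G0 :: "real \<Rightarrow> real" where "G0 z = exp (- (z^3))"
definition G1 :: "real \<Rightarrow> real" where "G1 z = - 3 * z^2 * exp (- (z^3))"
definition G2 :: "real \<Rightarrow> real" where "G2 z = (9 * z^4 - 6 * z) * exp (- (z^3))"
definition P0 :: "real \<Rightarrow> real" where "P0 y = y^2 * exp (- y)"
definition P1 :: "real \<Rightarrow> real" where "P1 y = (2 * y - y^2) * exp (- y)"
definition P2 :: "real \<Rightarrow> real" where "P2 y = (2 - 4 * y + y^2) * exp (- y)"

lemma G0_deriv: "(G0 has_real_derivative G1 z) (at z within S)"
  unfolding G0_def G1_def by (auto intro!: derivative_eq_intros simp: power2_eq_square power3_eq_cube)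
lemma G1_deriv: "(G1 has_real_derivative G2 z) (at z within S)"
  unfolding G1_def G2_def by (auto intro!: derivative_eq_intros simp: algebra_simps power2_eq_square power3_eq_cube power4_eq_xxxx)
lemma P0_deriv: "(P0 has_real_derivative P1 y) (at y within S)"
  unfolding P0_def P1_def by (auto intro!: derivative_eq_intros simp: algebra_simps power2_eq_square)
lemma P1_deriv: "(P1 has_real_derivative P2 y) (at y within S)"
  unfolding P1_def P2_def by (auto intro!: derivative_eq_intros simp: algebra_simps power2_eq_square)

lemma cont_GP: "continuous_on A G0" "continuous_on A G1" "continuous_on A G2"
   "continuous_on A P0" "continuous_on A P1" "continuous_on A P2"
  unfolding G0_def G1_def G2_def P0_def P1_def P2_def by (intro continuous_intros)+

lemma GP_at0: "G0 0 = 1" "G1 0 = 0" "G2 0 = 0" "P0 0 = 0" "P1 0 = 0" "P2 0 = 2"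
  by (simp_all add: G0_def G1_def G2_def P0_def P1_def P2_def)

lemma exp_poly_bounds:
  fixes t :: real assumes t: "t \<ge> 0"
  shows "t * exp (- t) \<le> 1" "t^2 * exp (- t) \<le> 2"
proof -
  have e: "exp t * exp (- t) = 1" by (simp add: exp_minus field_simps)
  have "t \<le> exp t" using exp_ge_add_one_self[of t] by linarith
  then have "t * exp (- t) \<le> exp t * exp (- t)" by (intro mult_right_mono) auto
  then show "t * exp (- t) \<le> 1" using e by linarith
  have "t^2 \<le> 2 * exp t" using exp_lower_Taylor_quadratic[OF t] t by (simp add: power2_eq_square) 
  then have "t^2 * exp (- t) \<le> 2 * exp t * exp (- t)" by (intro mult_right_mono) auto
  moreover have "2 * exp t * exp (- t) = 2" using e by (simp add: mult.assoc)
  ultimately show "t^2 * exp (- t) \<le> 2" by linarith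
qed

lemma G_bounds:
  fixes z :: real assumes z: "z \<ge> 0"
  shows "0 \<le> G0 z" "G0 z \<le> 1" "\<bar>G1 z\<bar> \<le> 6" "\<bar>G2 z\<bar> \<le> 39"
proof -
  let ?t = "z^3"
  have t: "?t \<ge> 0" using z by simp
  have e1: "exp (- ?t) \<le> 1" using t by simp
  have b1: "?t * exp (- ?t) \<le> 1" and b2: "?t^2 * exp (- ?t) \<le> 2" using exp_poly_bounds[OF t] by auto
  show "0 \<le> G0 z" "G0 z \<le> 1" unfolding G0_def using e1 by auto
  have z2: "z^2 \<le> 1 + z^3"
  proof (cases "z \<le> 1")
    case True then have "z^2 \<le> 1" using z by (simp add: power_le_one)
    then show ?thesis using z by (smt (verit) zero_le_power)
  next
    case False then have "z^2 \<le> z^3" by (simp add: power_increasing)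
    then show ?thesis by simp
  qed
  have z1: "z \<le> 1 + z^3"
  proof (cases "z \<le> 1")
    case True then show ?thesis using z by (smt (verit) zero_le_power)
  next
    case False then have "z^1 \<le> z^3" by (intro power_increasing) auto
    then show ?thesis by simp
  qed
  have z4: "z^4 \<le> 1 + (z^3)^2"
  proof (cases "z \<le> 1")
    case True then have "z^4 \<le> 1" using z by (simp add: power_le_one)
    then show ?thesis by (smt (verit) zero_le_power2)
  next
    case False then have "z^4 \<le> z^6" by (intro power_increasing) auto
    then show ?thesis by (simp add: power_mult[symmetric])
  qed
  have "\<bar>G1 z\<bar> = 3 * (z^2 * exp (- ?t))" unfolding G1_def using z by (simp add: abs_mult)
  also have "\<dots> \<le> 3 * ((1 + ?t) * exp (- ?t))" using z2 by (intro mult_left_mono mult_right_mono) auto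
  also have "\<dots> = 3 * exp (- ?t) + 3 * (?t * exp (- ?t))" by (simp add: algebra_simps)
  also have "\<dots> \<le> 3 * 2" using e1 b1 by linarith
  finally show "\<bar>G1 z\<bar> \<le> 6" by simp
  have "\<bar>G2 z\<bar> \<le> (9 * z^4 + 6 * z) * exp (- ?t)"
  proof -
    have "0 \<le> z^4" by simp
    then have "\<bar>9 * z^4 - 6 * z\<bar> \<le> 9 * z^4 + 6 * z" using z by (simp add: abs_le_iff)
    then show ?thesis unfolding G2_def by (simp add: abs_mult mult_right_mono)
  qed
  also have "\<dots> \<le> (9 * (1 + ?t^2) + 6 * (1 + ?t)) * exp (- ?t)"
    using z4 z1 by (intro mult_right_mono) auto
  also have "\<dots> = 15 * exp (- ?t) + 9 * (?t^2 * exp (- ?t)) + 6 * (?t * exp (- ?t))"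
    by (simp add: algebra_simps)
  also have "\<dots> \<le> 15 + 9 * 2 + 6 * 1" using e1 b1 b2 by linarith
  finally show "\<bar>G2 z\<bar> \<le> 39" by simp
qed

lemma P_bounds:
  fixes y :: real assumes y: "y \<ge> 0"
  shows "\<bar>P0 y\<bar> \<le> 2" "\<bar>P1 y\<bar> \<le> 4" "\<bar>P2 y\<bar> \<le> 8"
proof -
  have e1: "exp (- y) \<le> 1" using y by simp
  have b1: "y * exp (- y) \<le> 1" and b2: "y^2 * exp (- y) \<le> 2" using exp_poly_bounds[OF y] by auto
  show "\<bar>P0 y\<bar> \<le> 2" unfolding P0_def using b2 by (simp add: abs_mult)
  have "\<bar>P1 y\<bar> \<le> 2 * (y * exp (- y)) + y^2 * exp (- y)" unfolding P1_def
    by (simp add: abs_mult algebra_simps) (smt (verit) abs_triangle_ineq4 abs_mult abs_of_nonneg y zero_le_power2 exp_ge_zero mult_nonneg_nonneg)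
  then show "\<bar>P1 y\<bar> \<le> 4" using b1 b2 by linarith
  have "\<bar>P2 y\<bar> \<le> 2 * exp (- y) + 4 * (y * exp (- y)) + y^2 * exp (- y)" unfolding P2_def
    using y by (simp add: abs_mult algebra_simps) (smt (verit) abs_triangle_ineq4 abs_mult abs_of_nonneg y zero_le_power2 exp_ge_zero mult_nonneg_nonneg)
  then show "\<bar>P2 y\<bar> \<le> 8" using e1 b1 b2 by linarith
qed

lemma GP_at_top: "(G0 \<longlongrightarrow> 0) at_top" "(G1 \<longlongrightarrow> 0) at_top" "(G2 \<longlongrightarrow> 0) at_top"
  "(P0 \<longlongrightarrow> 0) at_top" "(P1 \<longlongrightarrow> 0) at_top" "(P2 \<longlongrightarrow> 0) at_top"
  unfolding G0_def G1_def G2_def P0_def P1_def P2_def by real_asymp+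



lemma at_Ici_nonbot: fixes x :: real assumes "x \<ge> 0" shows "at x within {0..} \<noteq> bot"
proof (cases "x = 0")
  case True then show ?thesis using at_within_Ici_at_right[of "0::real"] trivial_limit_at_right_real[of 0] by simp
next
  case False
  then have "x \<in> interior {0..}" using assms by simp
  then have "at x within {0..} = at x" by (rule at_within_interior)
  then show ?thesis by (simp add: at_neq_bot)
qed

lemma C2_d:
  fixes V V1 V2 :: "real \<Rightarrow> real"
  assumes d: "\<forall>x\<ge>0. (V has_real_derivative V1 x) (at x within {0..}) \<and> (V1 has_real_derivative V2 x) (at x within {0..})"
    and x: "x \<ge> 0"
  shows "d1 V x = V1 x" "d2 V x = V2 x"
proof -
  have e1: "d1 V y = V1 y" if y: "y \<ge> 0" for y
  proof -
    have "(V has_vector_derivative V1 y) (at y within {0..})"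
      using conjunct1[OF d[rule_format, OF y]] by (simp add: has_real_derivative_iff_has_vector_derivative)
    then show ?thesis unfolding d1_def by (rule vector_derivative_within[OF at_Ici_nonbot[OF y]])
  qed
  then show "d1 V x = V1 x" using x .
  have "(V1 has_vector_derivative V2 x) (at x within {0..})"
    using conjunct2[OF d[rule_format, OF x]] by (simp add: has_real_derivative_iff_has_vector_derivative)
  then have "(d1 V has_vector_derivative V2 x) (at x within {0..})"
  proof (rule has_vector_derivative_transform_within[where d=1])
    show "x \<in> {0..}" using x by simp
    fix x' :: real assume "x' \<in> {0..}"
    then show "V1 x' = d1 V x'" using e1[of x'] by simp
  qed simp
  then show "d2 V x = V2 x"
    unfolding d2_def d1_def[of "d1 V"] by (rule vector_derivative_within[OF at_Ici_nonbot[OF x]])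
qed

lemma C2_half_d:
  assumes "C2_half V"
  shows "continuous_on {0..} V" "continuous_on {0..} (d1 V)" "continuous_on {0..} (d2 V)"
    "\<forall>x\<ge>0. (V has_real_derivative d1 V x) (at x within {0..}) \<and> (d1 V has_real_derivative d2 V x) (at x within {0..})"
proof -
  obtain g1 g2 where g: "continuous_on {0..} V" "continuous_on {0..} g1" "continuous_on {0..} g2"
    "\<forall>x\<ge>0. (V has_real_derivative g1 x) (at x within {0..}) \<and> (g1 has_real_derivative g2 x) (at x within {0..})"
    using assms unfolding C2_half_def by blast
  have e1: "d1 V x = g1 x" if "x \<in> {0..}" for x
    by (rule C2_d(1)[OF g(4)]) (use that in simp)
  have e2: "d2 V x = g2 x" if "x \<in> {0..}" for x
    by (rule C2_d(2)[OF g(4)]) (use that in simp)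
  show "continuous_on {0..} V" by (rule g(1))
  show "continuous_on {0..} (d1 V)" by (rule continuous_on_cong[THEN iffD2, OF refl e1 g(2)])
  show "continuous_on {0..} (d2 V)" by (rule continuous_on_cong[THEN iffD2, OF refl e2 g(3)])
  have e1': "g1 x = d1 V x" if "x \<in> {0..}" for x using e1[OF that] by simp
  show "\<forall>x\<ge>0. (V has_real_derivative d1 V x) (at x within {0..}) \<and> (d1 V has_real_derivative d2 V x) (at x within {0..})"
  proof (intro allI impI conjI)
    fix x :: real assume x: "x \<ge> 0"
    show "(V has_real_derivative d1 V x) (at x within {0..})"
      using conjunct1[OF g(4)[rule_format, OF x]] e1[of x] x by simp
    have "(g1 has_real_derivative g2 x) (at x within {0..})" using conjunct2[OF g(4)[rule_format, OF x]] .
    then have "(d1 V has_real_derivative g2 x) (at x within {0..})"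
      unfolding has_real_derivative_iff_has_vector_derivative
    proof (rule has_vector_derivative_transform_within[where d=1])
      show "x \<in> {0..}" using x by simp
      fix x' :: real assume "x' \<in> {0..}"
      then show "g1 x' = d1 V x'" using e1'[of x'] by simp
    qed simp
    then show "(d1 V has_real_derivative d2 V x) (at x within {0..})" using e2[of x] x by simp
  qed
qed

lemma cont_right0: fixes V :: "real \<Rightarrow> real" assumes "continuous_on {0..} V" shows "(V \<longlongrightarrow> V 0) (at_right 0)"
proof -
  have "(V \<longlongrightarrow> V 0) (at 0 within {0..})" using assms unfolding continuous_on_def by simp
  then show ?thesis by (simp add: at_within_Ici_at_right)
qed

lemma isCont_right: fixes g :: "real \<Rightarrow> real" shows "isCont g x \<Longrightarrow> (g \<longlongrightarrow> g x) (at_right x)"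
  unfolding isCont_def using filterlim_at_split[of g "nhds (g x)" x] by simp

lemma isCont_G0: "isCont G0 z" by (rule continuous_on_interior[OF cont_GP(1)[of UNIV]]) simp
lemma isCont_G1: "isCont G1 z" by (rule continuous_on_interior[OF cont_GP(2)[of UNIV]]) simp
lemma isCont_G2: "isCont G2 z" by (rule continuous_on_interior[OF cont_GP(3)[of UNIV]]) simp
lemma isCont_P0: "isCont P0 z" by (rule continuous_on_interior[OF cont_GP(4)[of UNIV]]) simp
lemma isCont_P1: "isCont P1 z" by (rule continuous_on_interior[OF cont_GP(5)[of UNIV]]) simp
lemma isCont_P2: "isCont P2 z" by (rule continuous_on_interior[OF cont_GP(6)[of UNIV]]) simp
lemmas isCont_GP = isCont_G0 isCont_G1 isCont_G2 isCont_P0 isCont_P1 isCont_P2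

lemma cont_edge:
  fixes K :: "real \<Rightarrow> real"
  assumes "continuous_on {0<..} K" "(K \<longlongrightarrow> K 0) (at_right 0)"
  shows "continuous_on {0..} K"
  unfolding continuous_on_eq_continuous_within
proof
  fix x :: real assume x: "x \<in> {0..}"
  show "continuous (at x within {0..}) K"
  proof (cases "x = 0")
    case True then show ?thesis using assms(2) by (simp add: continuous_within at_within_Ici_at_right)
  next
    case False then have "x \<in> {0<..}" using x by auto
    then have "isCont K x" by (intro continuous_on_interior[OF assms(1)]) (simp add: interior_open)
    then show ?thesis by (rule continuous_at_imp_continuous_at_within)
  qed
qed

lemma finite_bound:
  fixes P :: "nat \<Rightarrow> real \<Rightarrow> bool"
  assumes "\<And>i. i < N \<Longrightarrow> \<exists>B. P i B" and "\<And>i B B'. P i B \<Longrightarrow> B \<le> B' \<Longrightarrow> P i B'"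
  shows "\<exists>B. \<forall>i<N. P i B"
proof -
  have "\<exists>B. \<forall>i. i < N \<longrightarrow> P i (B i)" by (rule choice) (use assms(1) in blast)
  then obtain B where B: "\<And>i. i < N \<Longrightarrow> P i (B i)" by blast
  show ?thesis
  proof (intro exI allI impI)
    fix i assume i: "i < N"
    have "B i \<le> (\<Sum>j<N. \<bar>B j\<bar>)"
    proof -
      have "\<bar>B i\<bar> \<le> (\<Sum>j<N. \<bar>B j\<bar>)" using i by (intro member_le_sum) auto
      then show ?thesis by linarith
    qed
    then show "P i (\<Sum>j<N. \<bar>B j\<bar>)" by (rule assms(2)[OF B[OF i]])
  qed
qed

lemma PC_bound: assumes "PC N g" shows "\<exists>B. \<forall>i<N. \<forall>x>0. \<bar>g (i, x)\<bar> \<le> B"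
proof (rule finite_bound)
  fix i assume "i < N"
  then have "bounded ((\<lambda>x. g (i, x)) ` {0<..})" using assms unfolding PC_def by blast
  then show "\<exists>B. \<forall>x>0. \<bar>g (i, x)\<bar> \<le> B" unfolding bounded_real by auto
next
  fix i B B' assume "\<forall>x>0. \<bar>g (i, x)\<bar> \<le> B" "B \<le> (B'::real)"
  then show "\<forall>x>0. \<bar>g (i, x)\<bar> \<le> B'" by (meson order_trans)
qed

lemma PC_lim: assumes "PC N g" "i < N" shows "((\<lambda>x. g (i, x)) \<longlongrightarrow> Lim (at_right 0) (\<lambda>x. g (i, x))) (at_right 0)"
proof -
  obtain l where "((\<lambda>x. g (i, x)) \<longlongrightarrow> l) (at_right 0)" using assms unfolding PC_def by blast
  moreover then have "Lim (at_right 0) (\<lambda>x. g (i, x)) = l" by (intro tendsto_Lim) auto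
  ultimately show ?thesis by simp
qed

lemma PC_cont: assumes "PC N g" "i < N" shows "continuous_on {0<..} (\<lambda>x. g (i, x))"
  using assms unfolding PC_def by blast



lemma DERIV_eq: "(f has_real_derivative D) F \<Longrightarrow> D = E \<Longrightarrow> (f has_real_derivative E) F" by simp

lemma abs_mult_le: fixes x y X Y :: real shows "\<bar>x\<bar> \<le> X \<Longrightarrow> \<bar>y\<bar> \<le> Y \<Longrightarrow> \<bar>x * y\<bar> \<le> X * Y"
  by (simp add: abs_mult mult_mono')

lemma abs_div_le: fixes x a :: real shows "a \<ge> 1 \<Longrightarrow> \<bar>x / a\<bar> \<le> \<bar>x\<bar>"
  by (simp add: abs_div divide_le_eq_1 mult_le_cancel_left1 pos_divide_le_eq) 

lemma dG0: "a \<noteq> 0 \<Longrightarrow> ((\<lambda>x. G0 (x / a)) has_real_derivative G1 (x / a) / a) (at x within S)"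
proof -
  assume a: "a \<noteq> 0"
  have "((\<lambda>x. G0 (x / a)) has_real_derivative G1 (x / a) * (1 / a)) (at x within S)"
    by (rule DERIV_chain2[where f=G0 and g="\<lambda>x. x / a", OF G0_deriv]) (use a in \<open>auto intro!: derivative_eq_intros\<close>)
  then show ?thesis by simp
qed
lemma dG1: "a \<noteq> 0 \<Longrightarrow> ((\<lambda>x. G1 (x / a) / a) has_real_derivative G2 (x / a) / a^2) (at x within S)"
proof -
  assume a: "a \<noteq> 0"
  have "((\<lambda>x. G1 (x / a)) has_real_derivative G2 (x / a) * (1 / a)) (at x within S)"
    by (rule DERIV_chain2[where f=G1 and g="\<lambda>x. x / a", OF G1_deriv]) (use a in \<open>auto intro!: derivative_eq_intros\<close>)
  from DERIV_cdivide[OF this, of a] show ?thesis by (simp add: power2_eq_square)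
qed
lemma dP0: "a \<noteq> 0 \<Longrightarrow> ((\<lambda>x. P0 (a * x) / a^2) has_real_derivative P1 (a * x) / a) (at x within S)"
proof -
  assume a: "a \<noteq> 0"
  have "((\<lambda>x. P0 (a * x)) has_real_derivative P1 (a * x) * a) (at x within S)"
    by (rule DERIV_chain2[where f=P0 and g="\<lambda>x. a * x", OF P0_deriv]) (auto intro!: derivative_eq_intros)
  from DERIV_cdivide[OF this, of "a^2"] a show ?thesis by (simp add: power2_eq_square)
qed
lemma dP1: "a \<noteq> 0 \<Longrightarrow> ((\<lambda>x. P1 (a * x) / a) has_real_derivative P2 (a * x)) (at x within S)"
proof -
  assume a: "a \<noteq> 0"
  have "((\<lambda>x. P1 (a * x)) has_real_derivative P2 (a * x) * a) (at x within S)"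
    by (rule DERIV_chain2[where f=P1 and g="\<lambda>x. a * x", OF P1_deriv]) (auto intro!: derivative_eq_intros)
  from DERIV_cdivide[OF this, of a] a show ?thesis by simp
qed

lemma cont_div: "continuous_on S (\<lambda>x::real. x / a)"
proof -
  have "continuous_on S (\<lambda>x::real. x * inverse a)" by (intro continuous_intros)
  then show ?thesis by (simp add: divide_inverse)
qed
lemma cont_mulc: "continuous_on S (\<lambda>x::real. a * x)" by (intro continuous_intros)
lemma contc_G0: "continuous_on S (\<lambda>x. G0 (x / a))"
  by (rule continuous_on_compose2[OF cont_GP(1)[of UNIV] cont_div]) simp
lemma contc_G1: "continuous_on S (\<lambda>x. G1 (x / a))"
  by (rule continuous_on_compose2[OF cont_GP(2)[of UNIV] cont_div]) simp
lemma contc_G2: "continuous_on S (\<lambda>x. G2 (x / a))"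
  by (rule continuous_on_compose2[OF cont_GP(3)[of UNIV] cont_div]) simp
lemma contc_P0: "continuous_on S (\<lambda>x. P0 (a * x))"
  by (rule continuous_on_compose2[OF cont_GP(4)[of UNIV] cont_mulc]) simp
lemma contc_P1: "continuous_on S (\<lambda>x. P1 (a * x))"
  by (rule continuous_on_compose2[OF cont_GP(5)[of UNIV] cont_mulc]) simp
lemma contc_P2: "continuous_on S (\<lambda>x. P2 (a * x))"
  by (rule continuous_on_compose2[OF cont_GP(6)[of UNIV] cont_mulc]) simp
lemmas contc_G = contc_G0 contc_G1 contc_G2 contc_P0 contc_P1 contc_P2

locale stk =
  fixes N :: nat and \<sigma> b f u :: "nat \<times> real \<Rightarrow> real" and \<rho> :: "nat \<Rightarrow> real" and \<eta> \<sigma>0 lam \<theta> :: real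
  assumes N: "N \<ge> 1" and sPC: "PC N \<sigma>" and bPC: "PC N b" and s0: "\<sigma>0 > 0"
    and sgt: "\<forall>i<N. \<forall>x>0. \<sigma> (i, x) > \<sigma>0"
    and fPC: "PC N f" and u: "C2bG N u"
    and eq: "\<forall>p\<in>Gamma N. p \<noteq> vtx \<longrightarrow> Lop N \<sigma> b u p - lam * u p = f p"
    and bc: "(\<Sum>i<N. \<rho> i * d1 (edge u i) 0) - \<eta> * lam * u vtx = \<eta> * \<theta>"
begin

definition "fl i = Lim (at_right 0) (\<lambda>x. f (i, x))"
definition "sl i = Lim (at_right 0) (\<lambda>x. \<sigma> (i, x))"
definition "bl i = Lim (at_right 0) (\<lambda>x. b (i, x))"
definition "cc i = (\<theta> - fl i) / (sl i)^2"
definition aa :: "nat \<Rightarrow> real" where "aa n = real (Suc n)"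
definition "ww n p = u p * G0 (snd p / aa n) + cc (fst p) * P0 (aa n * snd p) / (aa n)^2"
definition "W1 n i x = d1 (edge u i) x * G0 (x / aa n) + edge u i x * (G1 (x / aa n) / aa n) + cc i * (P1 (aa n * x) / aa n)"
definition "W2 n i x = d2 (edge u i) x * G0 (x / aa n) + d1 (edge u i) x * (G1 (x / aa n) / aa n)
   + (d1 (edge u i) x * (G1 (x / aa n) / aa n) + edge u i x * (G2 (x / aa n) / (aa n)^2)) + cc i * P2 (aa n * x)"
definition "RR n i x = \<sigma> (i, x)^2 * d1 (edge u i) x * G1 (x / aa n) / aa n
   + 1/2 * \<sigma> (i, x)^2 * edge u i x * G2 (x / aa n) / (aa n)^2
   + b (i, x) * edge u i x * G1 (x / aa n) / aa n
   + 1/2 * \<sigma> (i, x)^2 * cc i * P2 (aa n * x)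
   + b (i, x) * cc i * P1 (aa n * x) / aa n"
definition "LW n i x = G0 (x / aa n) * (f (i, x) + lam * edge u i x) + RR n i x"

lemma aa_ge1: "aa n \<ge> 1" and aa_pos: "aa n > 0" and aa_nz: "aa n \<noteq> 0"
  by (auto simp: aa_def)

lemma uC2: "i < N \<Longrightarrow> C2_half (edge u i)"
  using u unfolding C2bG_def C2G_def by blast

lemma edge_ww: "edge (ww n) i = (\<lambda>x. edge u i x * G0 (x / aa n) + cc i * (P0 (aa n * x) / (aa n)^2))"
proof
  fix x :: real
  show "edge (ww n) i x = edge u i x * G0 (x / aa n) + cc i * (P0 (aa n * x) / (aa n)^2)"
    by (cases "x = 0") (simp_all add: edge_def ww_def vtx_def GP_at0)
qed

lemma ww_derivs:
  assumes i: "i < N" and x: "x \<ge> 0"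
  shows "(edge (ww n) i has_real_derivative W1 n i x) (at x within {0..})"
    "(W1 n i has_real_derivative W2 n i x) (at x within {0..})"
proof -
  note ud = C2_half_d(4)[OF uC2[OF i], rule_format, OF x]
  have "((\<lambda>x. edge u i x * G0 (x / aa n) + cc i * (P0 (aa n * x) / (aa n)^2)) has_real_derivative
      d1 (edge u i) x * G0 (x / aa n) + edge u i x * (G1 (x / aa n) / aa n) + cc i * (P1 (aa n * x) / aa n)) (at x within {0..})"
    by (rule DERIV_eq[OF DERIV_add[OF DERIV_mult[OF conjunct1[OF ud] dG0[OF aa_nz]] DERIV_cmult[OF dP0[OF aa_nz]]]])
       (simp add: algebra_simps)
  then show "(edge (ww n) i has_real_derivative W1 n i x) (at x within {0..})"
    unfolding edge_ww W1_def .
  have "(W1 n i has_real_derivative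
     (d2 (edge u i) x * G0 (x / aa n) + d1 (edge u i) x * (G1 (x / aa n) / aa n))
     + (d1 (edge u i) x * (G1 (x / aa n) / aa n) + edge u i x * (G2 (x / aa n) / (aa n)^2)) + cc i * P2 (aa n * x)) (at x within {0..})"
    unfolding W1_def[abs_def]
    by (rule DERIV_eq[OF DERIV_add[OF DERIV_add[OF DERIV_mult[OF conjunct2[OF ud] dG0[OF aa_nz]] DERIV_mult[OF conjunct1[OF ud] dG1[OF aa_nz]]]
             DERIV_cmult[OF dP1[OF aa_nz]]]]) (simp add: algebra_simps)
  then show "(W1 n i has_real_derivative W2 n i x) (at x within {0..})"
    unfolding W2_def by simp
qed

lemma W_cont:
  assumes i: "i < N"
  shows "continuous_on {0..} (W1 n i)" "continuous_on {0..} (W2 n i)"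
proof -
  note c = C2_half_d(1-3)[OF uC2[OF i]]
  show "continuous_on {0..} (W1 n i)" unfolding W1_def[abs_def]
    by (intro continuous_intros contc_G c) (auto simp: aa_nz)
  show "continuous_on {0..} (W2 n i)" unfolding W2_def[abs_def]
    by (intro continuous_intros contc_G c) (auto simp: aa_nz)
qed

lemma ww_C2: assumes i: "i < N" shows "C2_half (edge (ww n) i)"
  unfolding C2_half_def
proof (intro exI conjI allI impI)
  show "continuous_on {0..} (edge (ww n) i)"
    using C2_half_d(1)[OF uC2[OF i]] unfolding edge_ww by (intro continuous_intros contc_G) (auto simp: aa_nz)
  show "continuous_on {0..} (W1 n i)" "continuous_on {0..} (W2 n i)" using W_cont[OF i] by auto
  fix x :: real assume "x \<ge> 0"
  then show "(edge (ww n) i has_real_derivative W1 n i x) (at x within {0..})"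
    "(W1 n i has_real_derivative W2 n i x) (at x within {0..})" using ww_derivs[OF i] by auto
qed

lemma ww_d: assumes i: "i < N" and x: "x \<ge> 0"
  shows "d1 (edge (ww n) i) x = W1 n i x" "d2 (edge (ww n) i) x = W2 n i x"
  using C2_d[of "edge (ww n) i" "W1 n i" "W2 n i" x] ww_derivs[OF i] x by auto

lemma u_eq: assumes i: "i < N" and x: "x > 0"
  shows "1/2 * \<sigma> (i, x)^2 * d2 (edge u i) x + b (i, x) * d1 (edge u i) x = f (i, x) + lam * edge u i x"
proof -
  have p: "(i, x) \<in> Gamma N" "(i, x) \<noteq> vtx" using i x by (auto simp: Gamma_def vtx_def)
  have "Lop N \<sigma> b u (i, x) = Ledge \<sigma> b u i x" using p(2) by (simp add: Lop_def)
  then show ?thesis using eq p x by (auto simp: Ledge_def edge_pos)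
qed

lemma Ledge_ww: assumes i: "i < N" and x: "x > 0"
  shows "Ledge \<sigma> b (ww n) i x = LW n i x"
proof -
  have "Ledge \<sigma> b (ww n) i x = 1/2 * \<sigma> (i, x)^2 * W2 n i x + b (i, x) * W1 n i x"
    unfolding Ledge_def using ww_d[OF i, of x n] x by simp
  also have "\<dots> = G0 (x / aa n) * (1/2 * \<sigma> (i, x)^2 * d2 (edge u i) x + b (i, x) * d1 (edge u i) x) + RR n i x"
    unfolding W1_def W2_def RR_def by (simp add: algebra_simps)
  also have "\<dots> = LW n i x" unfolding LW_def u_eq[OF i x] ..
  finally show ?thesis .
qed

end



lemma lim_div0: fixes g :: "real \<Rightarrow> real" assumes "isCont g 0" "a \<noteq> 0"
  shows "((\<lambda>x. g (x / a)) \<longlongrightarrow> g 0) (at_right 0)"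
proof -
  have "((\<lambda>x. x / a) \<longlongrightarrow> 0 / a) (at_right (0::real))" by (intro tendsto_intros) (use assms in auto)
  then show ?thesis using isCont_tendsto_compose[OF assms(1)] by simp
qed

lemma lim_mul0: fixes g :: "real \<Rightarrow> real" assumes "isCont g 0"
  shows "((\<lambda>x. g (a * x)) \<longlongrightarrow> g 0) (at_right 0)"
proof -
  have "((\<lambda>x. a * x) \<longlongrightarrow> a * 0) (at_right (0::real))" by (intro tendsto_intros)
  then show ?thesis using isCont_tendsto_compose[OF assms(1)] by simp
qed

lemma ev_pos: "eventually (\<lambda>x::real. x > 0) (at_right 0)"
  by (simp add: eventually_at_right_field) (use zero_less_one in blast)

context stk begin

lemma sl_ge: assumes i: "i < N" shows "sl i \<ge> \<sigma>0"
proof -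
  have l: "((\<lambda>x. \<sigma> (i, x)) \<longlongrightarrow> sl i) (at_right 0)" unfolding sl_def by (rule PC_lim[OF sPC i])
  have "eventually (\<lambda>x. \<sigma>0 \<le> \<sigma> (i, x)) (at_right 0)"
    using ev_pos by eventually_elim (use sgt i in \<open>auto intro: less_imp_le\<close>)
  then show ?thesis using tendsto_lowerbound[OF l] by simp
qed

lemma sl_nz: "i < N \<Longrightarrow> sl i \<noteq> 0" using sl_ge s0 by force

lemma LW_lim: assumes i: "i < N" shows "(LW n i \<longlongrightarrow> \<theta> + lam * u vtx) (at_right 0)"
proof -
  have lf: "((\<lambda>x. f (i, x)) \<longlongrightarrow> fl i) (at_right 0)" unfolding fl_def by (rule PC_lim[OF fPC i])
  have ls: "((\<lambda>x. \<sigma> (i, x)) \<longlongrightarrow> sl i) (at_right 0)" unfolding sl_def by (rule PC_lim[OF sPC i])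
  have lb: "((\<lambda>x. b (i, x)) \<longlongrightarrow> bl i) (at_right 0)" unfolding bl_def by (rule PC_lim[OF bPC i])
  have lV: "(edge u i \<longlongrightarrow> u vtx) (at_right 0)"
    using cont_right0[OF C2_half_d(1)[OF uC2[OF i]]] by (simp add: edge_def)
  have lV1: "(d1 (edge u i) \<longlongrightarrow> d1 (edge u i) 0) (at_right 0)"
    by (rule cont_right0[OF C2_half_d(2)[OF uC2[OF i]]])
  note g = lim_div0[OF isCont_G0 aa_nz] lim_div0[OF isCont_G1 aa_nz] lim_div0[OF isCont_G2 aa_nz]
    lim_mul0[OF isCont_P1] lim_mul0[OF isCont_P2]
  have "(LW n i \<longlongrightarrow> G0 0 * (fl i + lam * u vtx) + (sl i ^ 2 * d1 (edge u i) 0 * G1 0 / aa n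
     + 1/2 * sl i ^ 2 * u vtx * G2 0 / (aa n)^2 + bl i * u vtx * G1 0 / aa n
     + 1/2 * sl i ^ 2 * cc i * P2 0 + bl i * cc i * P1 0 / aa n)) (at_right 0)"
    unfolding LW_def[abs_def] RR_def
    by (intro tendsto_intros lf ls lb lV lV1 g) (simp_all add: aa_nz)
  moreover have "G0 0 * (fl i + lam * u vtx) + (sl i ^ 2 * d1 (edge u i) 0 * G1 0 / aa n
     + 1/2 * sl i ^ 2 * u vtx * G2 0 / (aa n)^2 + bl i * u vtx * G1 0 / aa n
     + 1/2 * sl i ^ 2 * cc i * P2 0 + bl i * cc i * P1 0 / aa n) = \<theta> + lam * u vtx"
    using sl_nz[OF i] by (simp add: GP_at0 cc_def field_simps)
  ultimately show ?thesis by simp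
qed

lemma Ledge_lim: assumes i: "i < N" shows "(Ledge \<sigma> b (ww n) i \<longlongrightarrow> \<theta> + lam * u vtx) (at_right 0)"
proof -
  have "eventually (\<lambda>x. LW n i x = Ledge \<sigma> b (ww n) i x) (at_right 0)"
    using ev_pos by eventually_elim (simp add: Ledge_ww[OF i])
  then show ?thesis using LW_lim[OF i] tendsto_cong by blast
qed

lemma Lop_vtx: "Lop N \<sigma> b (ww n) vtx = \<theta> + lam * u vtx"
proof -
  have "(THE l. \<forall>i<N. (Ledge \<sigma> b (ww n) i \<longlongrightarrow> l) (at_right 0)) = \<theta> + lam * u vtx"
  proof (rule the_equality)
    show "\<forall>i<N. (Ledge \<sigma> b (ww n) i \<longlongrightarrow> \<theta> + lam * u vtx) (at_right 0)" using Ledge_lim by blast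
    fix l assume "\<forall>i<N. (Ledge \<sigma> b (ww n) i \<longlongrightarrow> l) (at_right 0)"
    then have "(Ledge \<sigma> b (ww n) 0 \<longlongrightarrow> l) (at_right 0)" using N by simp
    moreover have "(Ledge \<sigma> b (ww n) 0 \<longlongrightarrow> \<theta> + lam * u vtx) (at_right 0)" using Ledge_lim N by simp
    ultimately show "l = \<theta> + lam * u vtx" by (rule tendsto_unique[rotated]) simp
  qed
  then show ?thesis by (simp add: Lop_def)
qed

lemma Lop_pos: assumes i: "i < N" and x: "x > 0" shows "Lop N \<sigma> b (ww n) (i, x) = LW n i x"
proof -
  have "(i, x) \<noteq> vtx" using x by (simp add: vtx_def)
  then show ?thesis by (simp add: Lop_def Ledge_ww[OF i x])
qed

end


lemma bmult: fixes g h :: "'a \<Rightarrow> real"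
  assumes "eventually (\<lambda>x. \<bar>g x\<bar> \<le> K) F" "(h \<longlongrightarrow> 0) F"
  shows "((\<lambda>x. g x * h x) \<longlongrightarrow> 0) F"
proof (rule Lim_null_comparison)
  show "eventually (\<lambda>x. norm (g x * h x) \<le> K * \<bar>h x\<bar>) F"
    using assms(1) by eventually_elim (simp add: abs_mult mult_right_mono)
  have "((\<lambda>x. \<bar>h x\<bar>) \<longlongrightarrow> 0) F" using assms(2) tendsto_rabs_zero by blast
  then show "((\<lambda>x. K * \<bar>h x\<bar>) \<longlongrightarrow> 0) F" using tendsto_mult_right_zero by blast
qed

lemma mul_top: assumes "a > 0" shows "filterlim (\<lambda>x::real. a * x) at_top at_top"
  by (rule filterlim_tendsto_pos_mult_at_top[OF tendsto_const _ filterlim_ident]) (use assms in simp)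
lemma div_top: assumes "a > 0" shows "filterlim (\<lambda>x::real. x / a) at_top at_top"
  using mul_top[of "1/a"] assms by simp

lemma aa_top: "filterlim (\<lambda>n. real (Suc n)) at_top sequentially"
  by (rule filterlim_compose[OF filterlim_real_sequentially filterlim_Suc])

lemma RR_bound:
  fixes s bb v v1 c K a g1 g2 p1 p2 :: real
  assumes "\<bar>s\<bar> \<le> K" "\<bar>bb\<bar> \<le> K" "\<bar>v\<bar> \<le> K" "\<bar>v1\<bar> \<le> K" "\<bar>c\<bar> \<le> K" "K \<ge> 1" "a \<ge> 1"
    "\<bar>g1\<bar> \<le> 6" "\<bar>g2\<bar> \<le> 39" "\<bar>p1\<bar> \<le> 4" "\<bar>p2\<bar> \<le> 8"
  shows "\<bar>s^2 * v1 * g1 / a + 1/2 * s^2 * v * g2 / a^2 + bb * v * g1 / a + 1/2 * s^2 * c * p2 + bb * c * p1 / a\<bar> \<le> 40 * K^3"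
proof -
  have a2: "a^2 \<ge> 1" using assms(7) by (simp add: one_le_power)
  have "\<bar>s\<bar>^2 \<le> K^2" by (rule power_mono[OF assms(1) abs_ge_zero])
  then have s2: "\<bar>s^2\<bar> \<le> K^2" by simp
  have KK: "K^2 \<le> K^3" using assms(6) by (simp add: power_increasing)
  have t1: "\<bar>s^2 * v1 * g1 / a\<bar> \<le> K^2 * K * 6"
    using abs_div_le[OF assms(7), of "s^2 * v1 * g1"] abs_mult_le[OF abs_mult_le[OF s2 assms(4)] assms(8)] by linarith
  have t2: "\<bar>1/2 * s^2 * v * g2 / a^2\<bar> \<le> 1/2 * K^2 * K * 39"
  proof -
    have "\<bar>1/2 * s^2\<bar> \<le> 1/2 * K^2" using s2 by simp
    from abs_mult_le[OF abs_mult_le[OF this assms(3)] assms(9)] abs_div_le[OF a2, of "1/2 * s^2 * v * g2"]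
    show ?thesis by linarith
  qed
  have t3: "\<bar>bb * v * g1 / a\<bar> \<le> K * K * 6"
    using abs_div_le[OF assms(7), of "bb * v * g1"] abs_mult_le[OF abs_mult_le[OF assms(2) assms(3)] assms(8)] by linarith
  have t4: "\<bar>1/2 * s^2 * c * p2\<bar> \<le> 1/2 * K^2 * K * 8"
  proof -
    have "\<bar>1/2 * s^2\<bar> \<le> 1/2 * K^2" using s2 by simp
    from abs_mult_le[OF abs_mult_le[OF this assms(5)] assms(11)] show ?thesis .
  qed
  have t5: "\<bar>bb * c * p1 / a\<bar> \<le> K * K * 4"
    using abs_div_le[OF assms(7), of "bb * c * p1"] abs_mult_le[OF abs_mult_le[OF assms(2) assms(5)] assms(10)] by linarith
  have K3: "K^2 * K = K^3" "K * K = K^2" by (simp_all add: power2_eq_square power3_eq_cube)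
  have e: "1/2 * K^2 * K * 39 = 39/2 * K^3" "1/2 * K^2 * K * 8 = 4 * K^3"
    by (simp_all add: power2_eq_square power3_eq_cube)
  show ?thesis using t1 t2 t3 t4 t5 KK e unfolding K3 abs_le_iff by (elim conjE, intro conjI; linarith)
qed

context stk begin

lemma Kbound: "\<exists>K\<ge>1. \<forall>i<N. \<bar>cc i\<bar> \<le> K \<and> (\<forall>x>0. \<bar>f (i, x)\<bar> \<le> K \<and> \<bar>\<sigma> (i, x)\<bar> \<le> K \<and> \<bar>b (i, x)\<bar> \<le> K
    \<and> \<bar>edge u i x\<bar> \<le> K \<and> \<bar>d1 (edge u i) x\<bar> \<le> K)"
proof -
  obtain Bf where Bf: "\<forall>i<N. \<forall>x>0. \<bar>f (i, x)\<bar> \<le> Bf" using PC_bound[OF fPC] by blast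
  obtain Bs where Bs: "\<forall>i<N. \<forall>x>0. \<bar>\<sigma> (i, x)\<bar> \<le> Bs" using PC_bound[OF sPC] by blast
  obtain Bb where Bb: "\<forall>i<N. \<forall>x>0. \<bar>b (i, x)\<bar> \<le> Bb" using PC_bound[OF bPC] by blast
  have "\<exists>B. \<forall>i<N. \<forall>x>0. \<bar>edge u i x\<bar> \<le> B"
  proof (rule finite_bound)
    fix i assume "i < N"
    then have "bounded (edge u i ` {0..})" using u unfolding C2bG_def by blast
    then obtain a where a: "\<forall>y\<in>edge u i ` {0..}. \<bar>y\<bar> \<le> a" unfolding bounded_real by blast
    show "\<exists>B. \<forall>x>0. \<bar>edge u i x\<bar> \<le> B"
      by (rule exI[of _ a]) (use a in auto)
  next
    fix i B B' assume "\<forall>x>0. \<bar>edge u i x\<bar> \<le> B" "B \<le> (B'::real)"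
    then show "\<forall>x>0. \<bar>edge u i x\<bar> \<le> B'" by (meson order_trans)
  qed
  then obtain Bu where Bu: "\<forall>i<N. \<forall>x>0. \<bar>edge u i x\<bar> \<le> Bu" by blast
  have "\<exists>B. \<forall>i<N. \<forall>x>0. \<bar>d1 (edge u i) x\<bar> \<le> B"
  proof (rule finite_bound)
    fix i assume "i < N"
    then have "bounded (d1 (edge u i) ` {0..})" using u unfolding C2bG_def by blast
    then obtain a where a: "\<forall>y\<in>d1 (edge u i) ` {0..}. \<bar>y\<bar> \<le> a" unfolding bounded_real by blast
    show "\<exists>B. \<forall>x>0. \<bar>d1 (edge u i) x\<bar> \<le> B"
      by (rule exI[of _ a]) (use a in auto)
  next
    fix i B B' assume "\<forall>x>0. \<bar>d1 (edge u i) x\<bar> \<le> B" "B \<le> (B'::real)"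
    then show "\<forall>x>0. \<bar>d1 (edge u i) x\<bar> \<le> B'" by (meson order_trans)
  qed
  then obtain Bu1 where Bu1: "\<forall>i<N. \<forall>x>0. \<bar>d1 (edge u i) x\<bar> \<le> Bu1" by blast
  have "\<exists>B. \<forall>i<N. \<bar>cc i\<bar> \<le> B"
    by (rule finite_bound) (auto intro: order_trans)
  then obtain Bc where Bc: "\<forall>i<N. \<bar>cc i\<bar> \<le> Bc" by blast
  define K where "K = 1 + \<bar>Bf\<bar> + \<bar>Bs\<bar> + \<bar>Bb\<bar> + \<bar>Bu\<bar> + \<bar>Bu1\<bar> + \<bar>Bc\<bar>"
  show ?thesis
  proof (intro exI[of _ K] conjI allI impI)
    show "1 \<le> K" unfolding K_def by simp
    fix i assume i: "i < N"
    show "\<bar>cc i\<bar> \<le> K" using Bc i unfolding K_def by force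
    fix x :: real assume x: "x > 0"
    show "\<bar>f (i, x)\<bar> \<le> K" using Bf i x unfolding K_def by force
    show "\<bar>\<sigma> (i, x)\<bar> \<le> K" using Bs i x unfolding K_def by force
    show "\<bar>b (i, x)\<bar> \<le> K" using Bb i x unfolding K_def by force
    show "\<bar>edge u i x\<bar> \<le> K" using Bu i x unfolding K_def by force
    show "\<bar>d1 (edge u i) x\<bar> \<le> K" using Bu1 i x unfolding K_def by force
  qed
qed

end


lemma bmult2: fixes g h :: "'a \<Rightarrow> real"
  assumes "eventually (\<lambda>x. \<bar>g x\<bar> \<le> K) F" "(h \<longlongrightarrow> 0) F"
  shows "((\<lambda>x. h x * g x) \<longlongrightarrow> 0) F"
  using bmult[OF assms] by (simp add: mult.commute)

context stk begin

lemma ww_vtx: "ww n vtx = u vtx" by (simp add: ww_def vtx_def GP_at0)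

lemma ww_pos: "x \<noteq> 0 \<Longrightarrow> ww n (i, x) = edge u i x * G0 (x / aa n) + cc i * (P0 (aa n * x) / (aa n)^2)"
  by (simp add: ww_def edge_pos)

lemma top_G: "((\<lambda>x. G0 (x / aa n)) \<longlongrightarrow> 0) at_top" "((\<lambda>x. G1 (x / aa n)) \<longlongrightarrow> 0) at_top"
  "((\<lambda>x. G2 (x / aa n)) \<longlongrightarrow> 0) at_top" "((\<lambda>x. P0 (aa n * x)) \<longlongrightarrow> 0) at_top"
  "((\<lambda>x. P1 (aa n * x)) \<longlongrightarrow> 0) at_top" "((\<lambda>x. P2 (aa n * x)) \<longlongrightarrow> 0) at_top"
  using filterlim_compose[OF GP_at_top(1) div_top[OF aa_pos]] filterlim_compose[OF GP_at_top(2) div_top[OF aa_pos]]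
    filterlim_compose[OF GP_at_top(3) div_top[OF aa_pos]] filterlim_compose[OF GP_at_top(4) mul_top[OF aa_pos]]
    filterlim_compose[OF GP_at_top(5) mul_top[OF aa_pos]] filterlim_compose[OF GP_at_top(6) mul_top[OF aa_pos]]
  by auto

lemma ww_C0: "C0 N (ww n)"
  unfolding C0_def contG_def
proof (intro conjI allI impI)
  fix i assume i: "i < N"
  show "continuous_on {0..} (edge (ww n) i)" by (rule C2_half_d(1)[OF ww_C2[OF i]])
  obtain K where K: "K \<ge> 1" "\<forall>i<N. \<bar>cc i\<bar> \<le> K \<and> (\<forall>x>0. \<bar>f (i, x)\<bar> \<le> K \<and> \<bar>\<sigma> (i, x)\<bar> \<le> K \<and> \<bar>b (i, x)\<bar> \<le> K
    \<and> \<bar>edge u i x\<bar> \<le> K \<and> \<bar>d1 (edge u i) x\<bar> \<le> K)" using Kbound by blast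
  have ev: "eventually (\<lambda>x. \<bar>edge u i x\<bar> \<le> K) at_top"
    using eventually_gt_at_top[of 0] by eventually_elim (use K i in auto)
  have "((\<lambda>x. edge u i x * G0 (x / aa n) + cc i * (P0 (aa n * x) / (aa n)^2)) \<longlongrightarrow> 0 + cc i * (0 / (aa n)^2)) at_top"
    by (intro tendsto_intros bmult[OF ev] top_G) (simp add: aa_nz)
  then show "(edge (ww n) i \<longlongrightarrow> 0) at_top" unfolding edge_ww by simp
qed

lemma LW_cont: assumes i: "i < N" shows "continuous_on {0<..} (LW n i)"
proof -
  have c: "continuous_on {0<..} (edge u i)" "continuous_on {0<..} (d1 (edge u i))"
    using C2_half_d(1,2)[OF uC2[OF i]] by (auto intro: continuous_on_subset)
  show ?thesis unfolding LW_def[abs_def] RR_def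
    using PC_cont[OF fPC i] PC_cont[OF sPC i] PC_cont[OF bPC i] c
    by (intro continuous_intros contc_G) (auto simp: aa_nz)
qed

lemma LW_top: assumes i: "i < N" shows "(LW n i \<longlongrightarrow> 0) at_top"
proof -
  obtain K where K: "K \<ge> 1" "\<forall>i<N. \<bar>cc i\<bar> \<le> K \<and> (\<forall>x>0. \<bar>f (i, x)\<bar> \<le> K \<and> \<bar>\<sigma> (i, x)\<bar> \<le> K \<and> \<bar>b (i, x)\<bar> \<le> K
    \<and> \<bar>edge u i x\<bar> \<le> K \<and> \<bar>d1 (edge u i) x\<bar> \<le> K)" using Kbound by blast
  have Kc: "\<bar>cc i\<bar> \<le> K" using K i by blast
  have Kx: "\<bar>f (i, x)\<bar> \<le> K" "\<bar>\<sigma> (i, x)\<bar> \<le> K" "\<bar>b (i, x)\<bar> \<le> K" "\<bar>edge u i x\<bar> \<le> K" "\<bar>d1 (edge u i) x\<bar> \<le> K"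
    if "x > 0" for x using K i that by blast+
  have s2: "\<bar>\<sigma> (i, x)^2\<bar> \<le> K^2" if "x > 0" for x
  proof -
    have "\<bar>\<sigma> (i, x)\<bar>^2 \<le> K^2" by (rule power_mono[OF Kx(2)[OF that] abs_ge_zero])
    then show ?thesis by simp
  qed
  have hs2: "\<bar>1/2 * \<sigma> (i, x)^2\<bar> \<le> 1/2 * K^2" if "x > 0" for x using s2[OF that] by simp
  note evp = eventually_gt_at_top[of "0::real"]
  have e0: "eventually (\<lambda>x. \<bar>f (i, x) + lam * edge u i x\<bar> \<le> K + \<bar>lam\<bar> * K) at_top"
    using evp
  proof eventually_elim
    case (elim x)
    have "\<bar>lam * edge u i x\<bar> \<le> \<bar>lam\<bar> * K" using abs_mult_le[OF order_refl Kx(4)[OF elim], of lam] by simp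
    then show ?case using Kx(1)[OF elim] by linarith
  qed
  have e1: "eventually (\<lambda>x. \<bar>\<sigma> (i, x)^2 * d1 (edge u i) x\<bar> \<le> K^2 * K) at_top"
    using evp by eventually_elim (rule abs_mult_le[OF s2 Kx(5)])
  have e2: "eventually (\<lambda>x. \<bar>1/2 * \<sigma> (i, x)^2 * edge u i x\<bar> \<le> 1/2 * K^2 * K) at_top"
    using evp by eventually_elim (rule abs_mult_le[OF hs2 Kx(4)])
  have e3: "eventually (\<lambda>x. \<bar>b (i, x) * edge u i x\<bar> \<le> K * K) at_top"
    using evp by eventually_elim (rule abs_mult_le[OF Kx(3) Kx(4)])
  have e4: "eventually (\<lambda>x. \<bar>1/2 * \<sigma> (i, x)^2 * cc i\<bar> \<le> 1/2 * K^2 * K) at_top"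
    using evp by eventually_elim (rule abs_mult_le[OF hs2 Kc])
  have e5: "eventually (\<lambda>x. \<bar>b (i, x) * cc i\<bar> \<le> K * K) at_top"
    using evp by eventually_elim (rule abs_mult_le[OF Kx(3) Kc])
  have t0: "((\<lambda>x. G0 (x / aa n) * (f (i, x) + lam * edge u i x)) \<longlongrightarrow> 0) at_top"
    by (rule bmult2[OF e0 top_G(1)])
  have t1: "((\<lambda>x. \<sigma> (i, x)^2 * d1 (edge u i) x * G1 (x / aa n) / aa n) \<longlongrightarrow> 0) at_top"
    by (rule tendsto_divide_zero[OF bmult[OF e1 top_G(2)]])
  have t2: "((\<lambda>x. 1/2 * \<sigma> (i, x)^2 * edge u i x * G2 (x / aa n) / (aa n)^2) \<longlongrightarrow> 0) at_top"
    by (rule tendsto_divide_zero[OF bmult[OF e2 top_G(3)]])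
  have t3: "((\<lambda>x. b (i, x) * edge u i x * G1 (x / aa n) / aa n) \<longlongrightarrow> 0) at_top"
    by (rule tendsto_divide_zero[OF bmult[OF e3 top_G(2)]])
  have t4: "((\<lambda>x. 1/2 * \<sigma> (i, x)^2 * cc i * P2 (aa n * x)) \<longlongrightarrow> 0) at_top"
    by (rule bmult[OF e4 top_G(6)])
  have t5: "((\<lambda>x. b (i, x) * cc i * P1 (aa n * x) / aa n) \<longlongrightarrow> 0) at_top"
    by (rule tendsto_divide_zero[OF bmult[OF e5 top_G(5)]])
  show ?thesis unfolding LW_def[abs_def] RR_def
    by (intro tendsto_add_zero t0 t1 t2 t3 t4 t5)
qed

lemma edge_Lop_pos: "i < N \<Longrightarrow> x > 0 \<Longrightarrow> edge (Lop N \<sigma> b (ww n)) i x = LW n i x"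
  by (simp add: edge_pos Lop_pos)

lemma Lop_C0: "C0 N (Lop N \<sigma> b (ww n))"
  unfolding C0_def contG_def
proof (intro conjI allI impI)
  fix i assume i: "i < N"
  have ev: "eventually (\<lambda>x. LW n i x = edge (Lop N \<sigma> b (ww n)) i x) (at_right 0)"
    using ev_pos by eventually_elim (simp add: edge_Lop_pos[OF i])
  have ev2: "eventually (\<lambda>x. LW n i x = edge (Lop N \<sigma> b (ww n)) i x) at_top"
    using eventually_gt_at_top[of "0::real"] by eventually_elim (simp add: edge_Lop_pos[OF i])
  show "continuous_on {0..} (edge (Lop N \<sigma> b (ww n)) i)"
  proof (rule cont_edge)
    show "continuous_on {0<..} (edge (Lop N \<sigma> b (ww n)) i)"
      by (rule continuous_on_cong[THEN iffD1, OF refl _ LW_cont[OF i]]) (simp add: edge_Lop_pos[OF i])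
    have "edge (Lop N \<sigma> b (ww n)) i 0 = \<theta> + lam * u vtx" by (simp add: edge_def Lop_vtx)
    then show "(edge (Lop N \<sigma> b (ww n)) i \<longlongrightarrow> edge (Lop N \<sigma> b (ww n)) i 0) (at_right 0)"
      using LW_lim[OF i, of n] tendsto_cong[OF ev] by simp
  qed
  show "(edge (Lop N \<sigma> b (ww n)) i \<longlongrightarrow> 0) at_top"
    using LW_top[OF i, of n] tendsto_cong[OF ev2] by simp
qed

lemma ww_DL: "DL N \<sigma> b \<eta> \<rho> (ww n)"
  unfolding DL_def
proof (intro conjI)
  show "C2G N (ww n)" unfolding C2G_def contG_def using ww_C2 C2_half_d(1) by blast
  show "C0 N (ww n)" by (rule ww_C0)
  show "C0 N (Lop N \<sigma> b (ww n))" by (rule Lop_C0)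
  have d: "d1 (edge (ww n) i) 0 = d1 (edge u i) 0" if "i < N" for i
    using ww_d(1)[OF that, of 0 n] by (simp add: W1_def GP_at0)
  have "(\<Sum>i<N. \<rho> i * d1 (edge (ww n) i) 0) = (\<Sum>i<N. \<rho> i * d1 (edge u i) 0)"
    by (rule sum.cong) (simp_all add: d)
  also have "\<dots> = \<eta> * (\<theta> + lam * u vtx)" using bc by (simp add: algebra_simps)
  finally show "\<eta> * Lop N \<sigma> b (ww n) vtx = (\<Sum>i<N. \<rho> i * d1 (edge (ww n) i) 0)"
    by (simp add: Lop_vtx)
qed

end


lemma inv_suc: "(\<lambda>n. inverse (real (Suc n))) \<longlonglongrightarrow> 0" by (rule LIMSEQ_inverse_real_of_nat)

context stk begin

lemma div_aa: assumes "(X \<longlongrightarrow> l) sequentially" shows "((\<lambda>n. X n / aa n) \<longlongrightarrow> 0) sequentially"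
proof -
  have "((\<lambda>n. X n * inverse (real (Suc n))) \<longlongrightarrow> l * 0) sequentially" by (intro tendsto_intros assms inv_suc)
  then show ?thesis by (simp add: aa_def divide_inverse)
qed

lemma div_aa2: assumes "(X \<longlongrightarrow> l) sequentially" shows "((\<lambda>n. X n / (aa n)^2) \<longlongrightarrow> 0) sequentially"
proof -
  have "((\<lambda>n. X n * (inverse (real (Suc n)))^2) \<longlongrightarrow> l * 0^2) sequentially" by (intro tendsto_intros assms inv_suc)
  then show ?thesis by (simp add: aa_def divide_inverse power_inverse)
qed

lemma seq_lims: assumes x: "x > 0"
  shows "(\<lambda>n. G0 (x / aa n)) \<longlonglongrightarrow> 1" "(\<lambda>n. G1 (x / aa n)) \<longlonglongrightarrow> 0" "(\<lambda>n. G2 (x / aa n)) \<longlonglongrightarrow> 0"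
    "(\<lambda>n. P0 (aa n * x)) \<longlonglongrightarrow> 0" "(\<lambda>n. P1 (aa n * x)) \<longlonglongrightarrow> 0" "(\<lambda>n. P2 (aa n * x)) \<longlonglongrightarrow> 0"
proof -
  have "(\<lambda>n. x * inverse (real (Suc n))) \<longlonglongrightarrow> x * 0" by (intro tendsto_intros inv_suc)
  then have z: "(\<lambda>n. x / aa n) \<longlonglongrightarrow> 0" by (simp add: aa_def divide_inverse)
  show "(\<lambda>n. G0 (x / aa n)) \<longlonglongrightarrow> 1" using isCont_tendsto_compose[OF isCont_G0 z] by (simp add: GP_at0)
  show "(\<lambda>n. G1 (x / aa n)) \<longlonglongrightarrow> 0" using isCont_tendsto_compose[OF isCont_G1 z] by (simp add: GP_at0)
  show "(\<lambda>n. G2 (x / aa n)) \<longlonglongrightarrow> 0" using isCont_tendsto_compose[OF isCont_G2 z] by (simp add: GP_at0)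
  have "filterlim (\<lambda>n. x * real (Suc n)) at_top sequentially"
    by (rule filterlim_tendsto_pos_mult_at_top[OF tendsto_const x aa_top])
  then have t: "filterlim (\<lambda>n. aa n * x) at_top sequentially" by (simp add: aa_def mult.commute)
  show "(\<lambda>n. P0 (aa n * x)) \<longlonglongrightarrow> 0" "(\<lambda>n. P1 (aa n * x)) \<longlonglongrightarrow> 0" "(\<lambda>n. P2 (aa n * x)) \<longlonglongrightarrow> 0"
    using filterlim_compose[OF GP_at_top(4) t] filterlim_compose[OF GP_at_top(5) t] filterlim_compose[OF GP_at_top(6) t]
    by auto
qed

lemma h_pos: assumes i: "i < N" and x: "x > 0"
  shows "lam * ww n (i, x) + (-1) * Lop N \<sigma> b (ww n) (i, x) =
    lam * cc i * (P0 (aa n * x) / (aa n)^2) - G0 (x / aa n) * f (i, x) - RR n i x"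
  using x by (simp add: ww_pos Lop_pos[OF i x] LW_def algebra_simps)

lemma h_lim: assumes p: "p \<in> Gamma N"
  shows "(\<lambda>n. lam * ww n p + (-1) * Lop N \<sigma> b (ww n) p) \<longlonglongrightarrow> - (if p \<noteq> vtx then f p else \<theta>)"
proof (cases "p = vtx")
  case True then show ?thesis by (simp add: ww_vtx Lop_vtx)
next
  case False
  then obtain i x where px: "p = (i, x)" "i < N" "x > 0" using Gamma_cases[OF p] by (cases p) auto
  note sl = seq_lims[OF px(3)]
  have t1: "(\<lambda>n. \<sigma> (i, x)^2 * d1 (edge u i) x * G1 (x / aa n) / aa n) \<longlonglongrightarrow> 0"
    by (rule div_aa[of "\<lambda>n. \<sigma> (i, x)^2 * d1 (edge u i) x * G1 (x / aa n)" "\<sigma> (i, x)^2 * d1 (edge u i) x * 0"]) (intro tendsto_intros sl)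
  have t2: "(\<lambda>n. 1/2 * \<sigma> (i, x)^2 * edge u i x * G2 (x / aa n) / (aa n)^2) \<longlonglongrightarrow> 0"
    by (rule div_aa2[of "\<lambda>n. 1/2 * \<sigma> (i, x)^2 * edge u i x * G2 (x / aa n)" "1/2 * \<sigma> (i, x)^2 * edge u i x * 0"]) (intro tendsto_intros sl)
  have t3: "(\<lambda>n. b (i, x) * edge u i x * G1 (x / aa n) / aa n) \<longlonglongrightarrow> 0"
    by (rule div_aa[of "\<lambda>n. b (i, x) * edge u i x * G1 (x / aa n)" "b (i, x) * edge u i x * 0"]) (intro tendsto_intros sl)
  have t4: "(\<lambda>n. 1/2 * \<sigma> (i, x)^2 * cc i * P2 (aa n * x)) \<longlonglongrightarrow> 0"
    using tendsto_mult_right_zero[OF sl(6), of "1/2 * \<sigma> (i, x)^2 * cc i"] by simp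
  have t5: "(\<lambda>n. b (i, x) * cc i * P1 (aa n * x) / aa n) \<longlonglongrightarrow> 0"
    by (rule div_aa[of "\<lambda>n. b (i, x) * cc i * P1 (aa n * x)" "b (i, x) * cc i * 0"]) (intro tendsto_intros sl)
  have R: "(\<lambda>n. RR n i x) \<longlonglongrightarrow> 0" unfolding RR_def by (intro tendsto_add_zero t1 t2 t3 t4 t5)
  have P: "(\<lambda>n. P0 (aa n * x) / (aa n)^2) \<longlonglongrightarrow> 0" by (rule div_aa2[OF sl(4)])
  have "(\<lambda>n. lam * cc i * (P0 (aa n * x) / (aa n)^2) - G0 (x / aa n) * f (i, x) - RR n i x)
      \<longlonglongrightarrow> lam * cc i * 0 - 1 * f (i, x) - 0"
    by (intro tendsto_intros P sl R)
  moreover have "(\<lambda>n. lam * ww n p + (-1) * Lop N \<sigma> b (ww n) p) =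
      (\<lambda>n. lam * cc i * (P0 (aa n * x) / (aa n)^2) - G0 (x / aa n) * f (i, x) - RR n i x)"
  proof
    fix n show "lam * ww n p + (-1) * Lop N \<sigma> b (ww n) p =
      lam * cc i * (P0 (aa n * x) / (aa n)^2) - G0 (x / aa n) * f (i, x) - RR n i x"
      using h_pos[OF px(2,3), of n] px(1) by simp
  qed
  ultimately show ?thesis using px False by simp
qed

lemma h_bound: "\<exists>B. \<forall>n p. p \<in> Gamma N \<longrightarrow> \<bar>lam * ww n p + (-1) * Lop N \<sigma> b (ww n) p\<bar> \<le> B"
proof -
  obtain K where K: "K \<ge> 1" "\<forall>i<N. \<bar>cc i\<bar> \<le> K \<and> (\<forall>x>0. \<bar>f (i, x)\<bar> \<le> K \<and> \<bar>\<sigma> (i, x)\<bar> \<le> K \<and> \<bar>b (i, x)\<bar> \<le> K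
    \<and> \<bar>edge u i x\<bar> \<le> K \<and> \<bar>d1 (edge u i) x\<bar> \<le> K)" using Kbound by blast
  show ?thesis
  proof (intro exI allI impI)
    fix n p assume p: "p \<in> Gamma N"
    show "\<bar>lam * ww n p + (-1) * Lop N \<sigma> b (ww n) p\<bar> \<le> \<bar>\<theta>\<bar> + \<bar>lam\<bar> * K * 2 + 1 * K + 40 * K^3"
    proof (cases "p = vtx")
      case True
      have "0 \<le> \<bar>lam\<bar> * K * 2 + 1 * K + 40 * K^3" using K(1) by simp
      then show ?thesis using True by (simp add: ww_vtx Lop_vtx)
    next
      case False
      then obtain i x where px: "p = (i, x)" "i < N" "x > 0" using Gamma_cases[OF p] by (cases p) auto
      have Kc: "\<bar>cc i\<bar> \<le> K" and Kx: "\<bar>f (i, x)\<bar> \<le> K" "\<bar>\<sigma> (i, x)\<bar> \<le> K" "\<bar>b (i, x)\<bar> \<le> K"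
        "\<bar>edge u i x\<bar> \<le> K" "\<bar>d1 (edge u i) x\<bar> \<le> K" using K px by blast+
      have z: "x / aa n \<ge> 0" "aa n * x \<ge> 0" using px(3) aa_pos[of n] by auto
      have a2: "(aa n)^2 \<ge> 1" using aa_ge1[of n] by (simp add: one_le_power)
      have "\<bar>P0 (aa n * x) / (aa n)^2\<bar> \<le> 2" using abs_div_le[OF a2, of "P0 (aa n * x)"] P_bounds(1)[OF z(2)] by linarith
      then have b1: "\<bar>lam * cc i * (P0 (aa n * x) / (aa n)^2)\<bar> \<le> \<bar>lam\<bar> * K * 2"
        by (intro abs_mult_le[OF abs_mult_le[OF order_refl Kc]]) auto
      have b2: "\<bar>G0 (x / aa n) * f (i, x)\<bar> \<le> 1 * K"
        using G_bounds(1,2)[OF z(1)] by (intro abs_mult_le Kx) auto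
      have b3: "\<bar>RR n i x\<bar> \<le> 40 * K^3" unfolding RR_def
        by (rule RR_bound[OF Kx(2) Kx(3) Kx(4) Kx(5) Kc K(1) aa_ge1 G_bounds(3)[OF z(1)] G_bounds(4)[OF z(1)]
              P_bounds(2)[OF z(2)] P_bounds(3)[OF z(2)]])
      have e: "lam * ww n p + (-1) * Lop N \<sigma> b (ww n) p = lam * cc i * (P0 (aa n * x) / (aa n)^2) - G0 (x / aa n) * f (i, x) - RR n i x"
        using h_pos[OF px(2,3), of n] px(1) by simp
      have "\<bar>lam * ww n p + (-1) * Lop N \<sigma> b (ww n) p\<bar> \<le> \<bar>lam\<bar> * K * 2 + 1 * K + 40 * K^3"
        unfolding e using b1 b2 b3 unfolding abs_le_iff by (elim conjE, intro conjI; linarith)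
      then show ?thesis by simp
    qed
  qed
qed

lemma ww_lim: assumes p: "p \<in> Gamma N" shows "(\<lambda>n. ww n p) \<longlonglongrightarrow> u p"
proof (cases "p = vtx")
  case True then show ?thesis by (simp add: ww_vtx)
next
  case False
  then obtain i x where px: "p = (i, x)" "i < N" "x > 0" using Gamma_cases[OF p] by (cases p) auto
  note sl = seq_lims[OF px(3)]
  have "(\<lambda>n. edge u i x * G0 (x / aa n) + cc i * (P0 (aa n * x) / (aa n)^2)) \<longlonglongrightarrow> edge u i x * 1 + cc i * 0"
    by (intro tendsto_intros sl div_aa2[OF sl(4)])
  then show ?thesis using px by (simp add: ww_pos edge_pos)
qed

end

theorem proposition5p1:
  fixes N :: nat and \<sigma> b f u :: "nat \<times> real \<Rightarrow> real" and \<rho> :: "nat \<Rightarrow> real"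
    and \<eta> \<sigma>0 lam \<theta> :: real
    and T :: "real \<Rightarrow> (nat \<times> real \<Rightarrow> real) \<Rightarrow> (nat \<times> real \<Rightarrow> real)"
    and P :: "nat \<times> real \<Rightarrow> 'a measure" and X :: "real \<Rightarrow> 'a \<Rightarrow> nat \<times> real"
  assumes N: "N \<ge> 1"
    and coeff: "PC N \<sigma>" "PC N b" "\<sigma>0 > 0" "\<forall>i<N. \<forall>x>0. \<sigma> (i, x) > \<sigma>0"
    and eta: "\<eta> \<ge> 0"
    and rho: "\<forall>i<N. \<rho> i > 0" "(\<Sum>i<N. \<rho> i) = 1"
    and sg: "strongly_continuous_semigroup N T"
    and gen: "has_generator N T (Lop N \<sigma> b) (DL N \<sigma> b \<eta> \<rho>)"
    and proc: "process_assoc N T P X"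
    and lam: "lam > 0"
    and fPC: "PC N f"
    and fbdd: "bounded (f ` Gamma N)"
    and u: "C2bG N u"
    and eq: "\<forall>p\<in>Gamma N. p \<noteq> vtx \<longrightarrow> Lop N \<sigma> b u p - lam * u p = f p"
    and bc: "(\<Sum>i<N. \<rho> i * d1 (edge u i) 0) - \<eta> * lam * u vtx = \<eta> * \<theta>"
  shows "\<forall>x\<in>Gamma N. u x = - (\<integral>\<omega>. (\<integral>s\<in>{0..}.
            ((if X s \<omega> \<noteq> vtx then f (X s \<omega>) else \<theta>) * exp (- lam * s)) \<partial>lborel) \<partial>P x)"
proof
  fix x assume x: "x \<in> Gamma N"
  interpret stk N \<sigma> b f u \<rho> \<eta> \<sigma>0 lam \<theta>
    by (unfold_locales) (use N coeff fPC u eq bc in auto)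
  obtain B where B: "\<forall>n p. p \<in> Gamma N \<longrightarrow> \<bar>lam * ww n p + (-1) * Lop N \<sigma> b (ww n) p\<bar> \<le> B"
    using h_bound by blast
  have conv: "((\<lambda>r. gnorm N (\<lambda>p. (T r (ww n) p - ww n p) / r - Lop N \<sigma> b (ww n) p)) \<longlongrightarrow> 0) (at_right 0)" for n
    using gen ww_C0[of n] ww_DL[of n] unfolding has_generator_def by blast
  have Fc: "\<forall>i<N. continuous_on {0<..} (\<lambda>y. (\<lambda>p. if p \<noteq> vtx then f p else \<theta>) (i, y))"
  proof (intro allI impI)
    fix i assume i: "i < N"
    show "continuous_on {0<..} (\<lambda>y. (\<lambda>p. if p \<noteq> vtx then f p else \<theta>) (i, y))"
      by (rule continuous_on_cong[THEN iffD1, OF refl _ PC_cont[OF fPC i]]) (auto simp: vtx_def)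
  qed
  have Bb: "\<And>n p. p \<in> Gamma N \<Longrightarrow> \<bar>lam * ww n p + (-1) * Lop N \<sigma> b (ww n) p\<bar> \<le> B"
    using B by blast
  have main: "u x = - (\<integral>\<omega>. (LINT s:{0..}|lborel. (\<lambda>p. if p \<noteq> vtx then f p else \<theta>) (X s \<omega>) * exp (- lam * s)) \<partial>P x)"
    by (rule final_limit[where F="\<lambda>p. if p \<noteq> vtx then f p else \<theta>", OF sg proc x lam ww_C0 Lop_C0 conv Fc h_lim Bb ww_lim[OF x]])
  then show "u x = - (\<integral>\<omega>. (\<integral>s\<in>{0..}.
            ((if X s \<omega> \<noteq> vtx then f (X s \<omega>) else \<theta>) * exp (- lam * s)) \<partial>lborel) \<partial>P x)"
    by simp
qed


end
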